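(* If a countable group $\Gamma$ admits an action on a countable set $X$ preserving a mean $\mu$ such that the action is strongly faithful with respect to $\mu$, then $\Gamma$ is sofic.
   Context: A mean on $X$ is a finitely additive $\mu:2^X\to[0,1]$ with $\mu(X)=1$; the action preserves $\mu$ if $\mu(\gamma A)=\mu(A)$ for all $\gamma\in\Gamma$, $A\subseteq X$. The action is strongly faithful if for every $\gamma\neq1$ the fixed point set $\{x:\gamma x=x\}$ has $\mu$-measure less than $1$. $\Gamma$ is sofic if for every finite $F\subseteq\Gamma$ and $\varepsilon>0$ there are a finite set $V$ and a map $\phi:\Gamma\to\mathrm{Sym}(V)$ such that for all $g,h\in F$, $|\{v:\phi(gh)v=\phi(g)\phi(h)v\}|\ge(1-\varepsilon)|V|$, and for all $g\in F\setminus\{1\}$, $|\{v:\phi(g)v\neq v\}|\ge(1-\varepsilon)|V|$. *)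

theory Defs
  imports Complex_Main "HOL-Library.Countable_Set" "HOL-Algebra.Group_Action"
begin

definition is_mean :: "'b set \<Rightarrow> ('b set \<Rightarrow> real) \<Rightarrow> bool" where
  "is_mean X \<mu> \<longleftrightarrow>
     (\<forall>A. A \<subseteq> X \<longrightarrow> 0 \<le> \<mu> A \<and> \<mu> A \<le> 1) \<and>
     (\<forall>A B. A \<subseteq> X \<longrightarrow> B \<subseteq> X \<longrightarrow> A \<inter> B = {} \<longrightarrow> \<mu> (A \<union> B) = \<mu> A + \<mu> B) \<and>
     \<mu> X = 1"

definition preserves_mean :: "('a, 'c) monoid_scheme \<Rightarrow> 'b set \<Rightarrow> ('a \<Rightarrow> 'b \<Rightarrow> 'b) \<Rightarrow> ('b set \<Rightarrow> real) \<Rightarrow> bool" where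
  "preserves_mean G X \<phi> \<mu> \<longleftrightarrow>
     (\<forall>g \<in> carrier G. \<forall>A. A \<subseteq> X \<longrightarrow> \<mu> (\<phi> g ` A) = \<mu> A)"

definition strongly_faithful :: "('a, 'c) monoid_scheme \<Rightarrow> 'b set \<Rightarrow> ('a \<Rightarrow> 'b \<Rightarrow> 'b) \<Rightarrow> ('b set \<Rightarrow> real) \<Rightarrow> bool" where
  "strongly_faithful G X \<phi> \<mu> \<longleftrightarrow>
     (\<forall>g \<in> carrier G. g \<noteq> \<one>\<^bsub>G\<^esub> \<longrightarrow> \<mu> {x \<in> X. \<phi> g x = x} < 1)"

text \<open>Soficity. The finite sets V are taken to be (nonempty) finite sets of naturals;
  a map into Sym(V) is a map sigma with each sigma g a bijection of V.\<close>
definition sofic :: "('a, 'c) monoid_scheme \<Rightarrow> bool" where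
  "sofic G \<longleftrightarrow>
     (\<forall>F \<epsilon>. F \<subseteq> carrier G \<longrightarrow> finite F \<longrightarrow> (\<epsilon>::real) > 0 \<longrightarrow>
        (\<exists>(V::nat set) (\<sigma>::'a \<Rightarrow> nat \<Rightarrow> nat).
           finite V \<and> V \<noteq> {} \<and>
           (\<forall>g \<in> carrier G. bij_betw (\<sigma> g) V V) \<and>
           (\<forall>g \<in> F. \<forall>h \<in> F.
              real (card {v \<in> V. \<sigma> (g \<otimes>\<^bsub>G\<^esub> h) v = \<sigma> g (\<sigma> h v)}) \<ge> (1 - \<epsilon>) * real (card V)) \<and>
           (\<forall>g \<in> F. g \<noteq> \<one>\<^bsub>G\<^esub> \<longrightarrow>
              real (card {v \<in> V. \<sigma> g v \<noteq> v}) \<ge> (1 - \<epsilon>) * real (card V))))"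

end

theory Submission
  imports Defs
begin

lemma sq_diff_le: "((a::real) - b)^2 \<le> 2*a^2 + 2*b^2"
proof -
  have "0 \<le> (a+b)^2" by simp
  thus ?thesis by (simp add: power2_eq_square algebra_simps)
qed

lemma sep_approx:
  fixes D :: "('k \<Rightarrow> real) set" and K :: "'k set"
  assumes "D \<noteq> {}"
   and conv: "\<And>u v t. u\<in>D \<Longrightarrow> v\<in>D \<Longrightarrow> 0\<le>t \<Longrightarrow> t\<le>1 \<Longrightarrow> (\<lambda>k. (1-t)*u k + t*v k) \<in> D"
   and R: "\<And>d. d\<in>D \<Longrightarrow> (\<Sum>k\<in>K. (d k)^2) \<le> R"
   and m: "\<And>d. d\<in>D \<Longrightarrow> m \<le> (\<Sum>k\<in>K. (d k)^2)" and mpos: "0<m"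
  shows "\<exists>p. \<forall>d\<in>D. m/2 \<le> (\<Sum>k\<in>K. p k * d k)"
proof -
  define Q where "Q = (\<lambda>d::'k\<Rightarrow>real. \<Sum>k\<in>K. (d k)^2)"
  define m0 where "m0 = Inf (Q ` D)"
  have bdd: "bdd_below (Q ` D)" using m unfolding Q_def bdd_below_def by blast
  have m0m: "m \<le> m0" unfolding m0_def using assms(1) m
    by (intro cInf_greatest) (auto simp: Q_def)
  obtain d0 where d0: "d0 \<in> D" using assms(1) by blast
  have Rpos: "0 < R" using R[OF d0] m[OF d0] mpos by linarith
  define t where "t = min 1 (m/(8*R))"
  have tpos: "0 < t" "t \<le> 1" "t \<le> m/(8*R)" using Rpos mpos by (auto simp: t_def)
  define \<eta> where "\<eta> = t*m/2"
  have etapos: "0 < \<eta>" using tpos mpos by (simp add: \<eta>_def)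
  have "\<exists>q\<in>Q`D. q < m0 + \<eta>"
    unfolding m0_def using assms(1) etapos by (intro cInf_lessD) auto
  then obtain p where pD: "p \<in> D" and pQ: "Q p < m0 + \<eta>" by auto
  show ?thesis
  proof (intro exI ballI)
    fix d assume dD: "d \<in> D"
    define y where "y = (\<lambda>k. (1-t)*p k + t*d k)"
    have yD: "y \<in> D" unfolding y_def using conv[OF pD dD] tpos by auto
    have "m0 \<le> Q y" unfolding m0_def using yD bdd by (intro cInf_lower) auto
    have Qy: "Q y = Q p + 2*t*(\<Sum>k\<in>K. p k * (d k - p k)) + t^2 * (\<Sum>k\<in>K. (d k - p k)^2)"
    proof -
      have "\<And>k. ((1-t)*p k + t*d k)^2 = (p k)^2 + 2*t*(p k * (d k - p k)) + t^2*(d k - p k)^2"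
        by (simp add: power2_eq_square algebra_simps)
      thus ?thesis unfolding Q_def y_def
        by (simp add: sum.distrib sum_distrib_left)
    qed
    have "(\<Sum>k\<in>K. (d k - p k)^2) \<le> (\<Sum>k\<in>K. 2*(d k)^2 + 2*(p k)^2)"
      by (intro sum_mono sq_diff_le)
    also have "\<dots> = 2*Q d + 2*Q p" by (simp add: Q_def sum.distrib sum_distrib_left)
    also have "\<dots> \<le> 4*R" using R[OF dD] R[OF pD] by (simp add: Q_def)
    finally have dp: "(\<Sum>k\<in>K. (d k - p k)^2) \<le> 4*R" .
    have "t^2 * (\<Sum>k\<in>K. (d k - p k)^2) \<le> t^2 * (4*R)"
      using dp by (intro mult_left_mono) auto
    hence A: "m0 \<le> Q p + 2*t*(\<Sum>k\<in>K. p k * (d k - p k)) + t^2*(4*R)"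
      using \<open>m0 \<le> Q y\<close> Qy by linarith
    have tR: "t^2*(4*R) \<le> t*(m/2)"
    proof -
      have "t*(4*R) \<le> m/2" using tpos Rpos by (simp add: field_simps)
      hence "t*(t*(4*R)) \<le> t*(m/2)" using tpos by (intro mult_left_mono) auto
      thus ?thesis by (simp add: power2_eq_square algebra_simps)
    qed
    have B: "2*t*(\<Sum>k\<in>K. p k * (d k - p k)) \<ge> - t*m" 
      using A pQ tR by (simp add: \<eta>_def)
    have "(\<Sum>k\<in>K. p k * (d k - p k)) \<ge> - m/2"
    proof -
      have "2*t*((\<Sum>k\<in>K. p k * (d k - p k)) + m/2) \<ge> 0" using B by (simp add: algebra_simps)
      hence "(\<Sum>k\<in>K. p k * (d k - p k)) + m/2 \<ge> 0" using tpos
        by (simp add: zero_le_mult_iff)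
      thus ?thesis by simp
    qed
    moreover have "(\<Sum>k\<in>K. p k * d k) = Q p + (\<Sum>k\<in>K. p k * (d k - p k))"
      by (simp add: Q_def sum.distrib[symmetric] power2_eq_square algebra_simps)
    moreover have "m \<le> Q p" using m[OF pD] by (simp add: Q_def)
    ultimately show "m/2 \<le> (\<Sum>k\<in>K. p k * d k)" by linarith
  qed
qed

locale setting =
  fixes G (structure) and X :: "'b set" and \<phi> :: "'a \<Rightarrow> 'b \<Rightarrow> 'b" and \<mu> :: "'b set \<Rightarrow> real"
  assumes grp: "group G" and act: "group_action G X \<phi>" and mean: "is_mean X \<mu>"
    and pres: "preserves_mean G X \<phi> \<mu>"
begin

lemma mu_add: "A \<subseteq> X \<Longrightarrow> B \<subseteq> X \<Longrightarrow> A \<inter> B = {} \<Longrightarrow> \<mu> (A \<union> B) = \<mu> A + \<mu> B"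
  using mean unfolding is_mean_def by blast

lemma mu_X: "\<mu> X = 1" using mean unfolding is_mean_def by blast

lemma mu_nonneg: "A \<subseteq> X \<Longrightarrow> 0 \<le> \<mu> A" using mean unfolding is_mean_def by blast

lemma mu_empty: "\<mu> {} = 0"
  using mu_add[of "{}" "{}"] by simp

lemma X_ne: "X \<noteq> {}" using mu_X mu_empty by auto

lemma mu_Union:
  assumes "finite T" "\<And>t. t\<in>T \<Longrightarrow> A t \<subseteq> X" "\<And>s t. s\<in>T \<Longrightarrow> t\<in>T \<Longrightarrow> s \<noteq> t \<Longrightarrow> A s \<inter> A t = {}"
  shows "\<mu> (\<Union>t\<in>T. A t) = (\<Sum>t\<in>T. \<mu> (A t))"
  using assms
proof (induction T rule: finite_induct)
  case empty then show ?case by (simp add: mu_empty)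
next
  case (insert t T)
  have d: "\<And>s t. s\<in>T \<Longrightarrow> t\<in>T \<Longrightarrow> s \<noteq> t \<Longrightarrow> A s \<inter> A t = {}" using insert.prems(2) by auto
  have "A t \<inter> (\<Union>t\<in>T. A t) = {}" using insert.prems(2) insert.hyps(2) by blast
  hence "\<mu> (\<Union>t\<in>insert t T. A t) = \<mu> (A t) + \<mu> (\<Union>t\<in>T. A t)"
    using insert.prems(1) by (simp add: mu_add UN_least)
  also have "\<mu> (\<Union>t\<in>T. A t) = (\<Sum>t\<in>T. \<mu> (A t))" using insert.IH insert.prems by blast
  finally show ?case using insert.hyps by simp
qed

definition I :: "('b \<Rightarrow> real) \<Rightarrow> real" where
  "I q = (\<Sum>r\<in>q`X. r * \<mu> {x\<in>X. q x = r})"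

lemma I_types:
  assumes fin: "finite (\<tau> ` X)"
  shows "I (\<lambda>x. F (\<tau> x)) = (\<Sum>t\<in>\<tau>`X. F t * \<mu> {x\<in>X. \<tau> x = t})"
proof -
  have img: "(\<lambda>x. F (\<tau> x)) ` X = F ` (\<tau> ` X)" by auto
  have "\<And>r. {x\<in>X. F (\<tau> x) = r} = (\<Union>t\<in>{t\<in>\<tau>`X. F t = r}. {x\<in>X. \<tau> x = t})" by auto
  hence mu_r: "\<And>r. \<mu> {x\<in>X. F (\<tau> x) = r} = (\<Sum>t\<in>{t\<in>\<tau>`X. F t = r}. \<mu> {x\<in>X. \<tau> x = t})"
    using fin by (simp, intro mu_Union) auto
  have "I (\<lambda>x. F (\<tau> x)) = (\<Sum>r\<in>F`(\<tau>`X). (\<Sum>t\<in>{t\<in>\<tau>`X. F t = r}. F t * \<mu> {x\<in>X. \<tau> x = t}))"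
    unfolding I_def img mu_r by (intro sum.cong refl) (auto simp: sum_distrib_left)
  also have "\<dots> = (\<Sum>t\<in>\<tau>`X. F t * \<mu> {x\<in>X. \<tau> x = t})"
    using fin by (intro sum.group) auto
  finally show ?thesis .
qed

lemma phi_bij: "g \<in> carrier G \<Longrightarrow> bij_betw (\<phi> g) X X"
  using group_action.bij_prop0[OF act] by (simp add: Bij_def)

lemma phi_in: "g \<in> carrier G \<Longrightarrow> x \<in> X \<Longrightarrow> \<phi> g x \<in> X"
  using group_action.element_image[OF act] by blast

lemma phi_comp: "g \<in> carrier G \<Longrightarrow> h \<in> carrier G \<Longrightarrow> x \<in> X \<Longrightarrow> \<phi> (g \<otimes> h) x = \<phi> g (\<phi> h x)"
  using group_action.composition_rule[OF act] by blast

lemma phi_one: "x \<in> X \<Longrightarrow> \<phi> \<one> x = x"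
  using group_action.id_eq_one[OF act] by (metis restrict_apply')

lemma phi_inv: "g \<in> carrier G \<Longrightarrow> x \<in> X \<Longrightarrow> \<phi> g (\<phi> (inv g) x) = x"
  using phi_comp[of g "inv g" x] phi_one grp by (simp add: group.r_inv group.inv_closed)

lemma phi_inv2: "g \<in> carrier G \<Longrightarrow> x \<in> X \<Longrightarrow> \<phi> (inv g) (\<phi> g x) = x"
  using phi_comp[of "inv g" g x] phi_one grp by (simp add: group.l_inv group.inv_closed)

lemma I_inv:
  assumes s: "s \<in> carrier G"
  shows "I (\<lambda>x. q (\<phi> (inv s) x)) = I q"
proof -
  have iss: "inv s \<in> carrier G" using grp s by (simp add: group.inv_closed)
  have img: "(\<lambda>x. q (\<phi> (inv s) x)) ` X = q ` X"
  proof -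
    have "(\<lambda>x. q (\<phi> (inv s) x)) ` X = q ` (\<phi> (inv s) ` X)" by auto
    also have "\<phi> (inv s) ` X = X" using phi_bij[OF iss] by (simp add: bij_betw_def)
    finally show ?thesis .
  qed
  have lev: "\<And>r. {x\<in>X. q (\<phi> (inv s) x) = r} = \<phi> s ` {y\<in>X. q y = r}"
  proof
    fix r show "{x\<in>X. q (\<phi> (inv s) x) = r} \<subseteq> \<phi> s ` {y\<in>X. q y = r}"
    proof
      fix x assume x: "x \<in> {x\<in>X. q (\<phi> (inv s) x) = r}"
      hence "x = \<phi> s (\<phi> (inv s) x)" using phi_inv[OF s] by auto
      moreover have "\<phi> (inv s) x \<in> {y\<in>X. q y = r}" using x phi_in[OF iss] by auto
      ultimately show "x \<in> \<phi> s ` {y\<in>X. q y = r}" by blast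
    qed
  next
    fix r show "\<phi> s ` {y\<in>X. q y = r} \<subseteq> {x\<in>X. q (\<phi> (inv s) x) = r}"
      using phi_inv2[OF s] phi_in[OF s] by auto
  qed
  have "\<And>r. \<mu> (\<phi> s ` {y\<in>X. q y = r}) = \<mu> {y\<in>X. q y = r}"
    using pres s unfolding preserves_mean_def by auto
  thus ?thesis unfolding I_def img lev by simp
qed

end

primrec Jseq :: "(nat \<Rightarrow> 'b \<Rightarrow> 'v) \<Rightarrow> 'v set \<Rightarrow> (nat \<Rightarrow> 'b) \<Rightarrow> nat \<Rightarrow> nat set" where
  "Jseq Gs Vals e 0 = UNIV"
| "Jseq Gs Vals e (Suc k) = {N \<in> Jseq Gs Vals e k. Gs N (e k) =
      (SOME v. v\<in>Vals \<and> infinite {N\<in>Jseq Gs Vals e k. Gs N (e k) = v})}"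

lemma pig:
  fixes Gs :: "nat \<Rightarrow> 'b \<Rightarrow> 'v"
  assumes "infinite I" "finite Vals" "\<And>N. Gs N x \<in> Vals"
  shows "\<exists>v. v\<in>Vals \<and> infinite {N\<in>I. Gs N x = v}"
proof (rule ccontr)
  assume "\<not> ?thesis"
  hence "finite (\<Union>v\<in>Vals. {N\<in>I. Gs N x = v})" using assms(2) by auto
  moreover have "I = (\<Union>v\<in>Vals. {N\<in>I. Gs N x = v})" using assms(3) by auto
  ultimately show False using assms(1) by simp
qed

lemma diag:
  fixes Gs :: "nat \<Rightarrow> 'b \<Rightarrow> 'v"
  assumes cX: "countable X" and fV: "finite Vals" and GV: "\<And>N x. x\<in>X \<Longrightarrow> Gs N x \<in> Vals"
  shows "\<exists>g. (\<forall>x\<in>X. g x \<in> Vals) \<and>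
     (\<forall>Z. finite Z \<longrightarrow> Z \<subseteq> X \<longrightarrow> (\<forall>N0. \<exists>N\<ge>N0. \<forall>x\<in>Z. Gs N x = g x))"
proof (cases "X = {}")
  case True
  have "\<forall>Z. finite Z \<longrightarrow> Z \<subseteq> X \<longrightarrow> (\<forall>N0. \<exists>N\<ge>N0. \<forall>x\<in>Z. Gs N x = undefined x)"
  proof (intro allI impI)
    fix Z N0 assume "finite Z" "Z \<subseteq> X"
    hence "Z = {}" using True by auto
    thus "\<exists>N\<ge>N0. \<forall>x\<in>Z. Gs N x = undefined x" by (intro exI[of _ N0]) auto
  qed
  thus ?thesis using True by blast
next
  case False
  define e where "e = from_nat_into X"
  have eX: "\<And>k. e k \<in> X" using False by (simp add: e_def from_nat_into)
  have rng: "\<And>x. x \<in> X \<Longrightarrow> \<exists>k. e k = x" using cX unfolding e_def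
    by (metis from_nat_into_to_nat_on)
  define J where "J = Jseq Gs Vals e"
  define pv where "pv = (\<lambda>k. SOME v. v\<in>Vals \<and> infinite {N\<in>J k. Gs N (e k) = v})"
  have Jsuc: "\<And>k. J (Suc k) = {N\<in>J k. Gs N (e k) = pv k}" by (simp add: J_def pv_def)
  have inf: "infinite (J k) \<and> pv k \<in> Vals" for k
  proof (induction k)
    case 0
    have i0: "infinite (J 0)" by (simp add: J_def)
    have "\<exists>v. v\<in>Vals \<and> infinite {N\<in>J 0. Gs N (e 0) = v}"
      by (rule pig[where Gs=Gs, OF i0 fV GV[OF eX[of 0]]])
    from someI_ex[OF this] show ?case using i0 unfolding pv_def by blast
  next
    case (Suc k)
    have "\<exists>v. v\<in>Vals \<and> infinite {N\<in>J k. Gs N (e k) = v}"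
      using pig[where Gs=Gs, OF _ fV GV[OF eX[of k]]] Suc by blast
    from someI_ex[OF this] have i1: "infinite (J (Suc k))" unfolding Jsuc pv_def by blast
    have "\<exists>v. v\<in>Vals \<and> infinite {N\<in>J (Suc k). Gs N (e (Suc k)) = v}"
      by (rule pig[where Gs=Gs, OF i1 fV GV[OF eX[of "Suc k"]]])
    from someI_ex[OF this] show ?case using i1 unfolding pv_def by blast
  qed
  have mono: "k \<le> l \<Longrightarrow> J l \<subseteq> J k" for k l
  proof (induction l)
    case 0 thus ?case by simp
  next
    case (Suc l)
    have s: "J (Suc l) \<subseteq> J l" unfolding Jsuc by blast
    show ?case
    proof (cases "k = Suc l")
      case False
      hence "k \<le> l" using Suc.prems by simp
      thus ?thesis using Suc.IH s by blast
    qed simp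
  qed
  define kx where "kx = (\<lambda>x. LEAST k. e k = x)"
  have kx: "e (kx x) = x" if xX: "x\<in>X" for x
  proof -
    obtain k where "e k = x" using rng[OF xX] by blast
    thus ?thesis unfolding kx_def by (rule LeastI)
  qed
  define g where "g = (\<lambda>x. pv (kx x))"
  have g1: "\<forall>x\<in>X. g x \<in> Vals" using inf by (simp add: g_def)
  have "\<forall>Z. finite Z \<longrightarrow> Z \<subseteq> X \<longrightarrow> (\<forall>N0. \<exists>N\<ge>N0. \<forall>x\<in>Z. Gs N x = g x)"
  proof (intro allI impI)
    fix Z N0 assume Z: "finite Z" "Z \<subseteq> X"
    define K where "K = Suc (Max (insert 0 (kx ` Z)))"
    have "infinite (J K)" using inf by blast
    then obtain N where N: "N \<in> J K" "N0 \<le> N"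
      by (meson infinite_nat_iff_unbounded_le)
    show "\<exists>N\<ge>N0. \<forall>x\<in>Z. Gs N x = g x"
    proof (intro exI conjI ballI)
      show "N0 \<le> N" by fact
    next
      fix x assume xZ: "x \<in> Z"
      have "kx x \<le> Max (insert 0 (kx ` Z))" using Z xZ by simp
      hence "J K \<subseteq> J (Suc (kx x))" unfolding K_def by (intro mono) simp
      hence "N \<in> J (Suc (kx x))" using N by blast
      thus "Gs N x = g x" using kx[of x] xZ Z unfolding Jsuc g_def by auto
    qed
  qed
  with g1 show ?thesis by blast
qed

lemma cs_sum:
  fixes f :: "'k \<Rightarrow> real"
  assumes "finite K"
  shows "(\<Sum>k\<in>K. \<bar>f k\<bar>)^2 \<le> real (card K) * (\<Sum>k\<in>K. (f k)^2)"
proof (cases "K = {}")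
  case True thus ?thesis by simp
next
  case False
  define n where "n = real (card K)"
  define a where "a = (\<lambda>k. \<bar>f k\<bar>)"
  define s where "s = (\<Sum>k\<in>K. a k)"
  have npos: "0 < n" using False assms by (simp add: n_def card_gt_0_iff)
  have e: "\<And>k. (n * a k - s)^2 = n^2 * (a k)^2 - (2*n*s) * a k + s^2"
    by (simp add: power2_eq_square algebra_simps)
  have "0 \<le> (\<Sum>k\<in>K. (n * a k - s)^2)" by (simp add: sum_nonneg)
  also have "\<dots> = n^2 * (\<Sum>k\<in>K. (a k)^2) - (2*n*s) * s + n * s^2"
    unfolding e by (simp add: sum.distrib sum_subtractf sum_distrib_left[symmetric] s_def n_def)
  finally have "n * s^2 \<le> n^2 * (\<Sum>k\<in>K. (a k)^2)" by (simp add: power2_eq_square algebra_simps)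
  hence "n * s^2 \<le> n * (n * (\<Sum>k\<in>K. (a k)^2))" by (simp add: power2_eq_square algebra_simps)
  hence "s^2 \<le> n * (\<Sum>k\<in>K. (a k)^2)" using npos by simp
  thus ?thesis by (simp add: s_def a_def n_def)
qed

lemma sq_sum_le:
  fixes f :: "'k \<Rightarrow> real"
  assumes "finite K"
  shows "(\<Sum>k\<in>K. (f k)^2) \<le> (\<Sum>k\<in>K. \<bar>f k\<bar>)^2"
proof -
  have "(\<Sum>k\<in>K. (f k)^2) \<le> (\<Sum>k\<in>K. \<bar>f k\<bar> * (\<Sum>k\<in>K. \<bar>f k\<bar>))"
  proof (intro sum_mono)
    fix k assume "k \<in> K"
    hence "\<bar>f k\<bar> \<le> (\<Sum>k\<in>K. \<bar>f k\<bar>)" using assms by (intro member_le_sum) auto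
    hence "\<bar>f k\<bar> * \<bar>f k\<bar> \<le> \<bar>f k\<bar> * (\<Sum>k\<in>K. \<bar>f k\<bar>)" by (intro mult_left_mono) auto
    thus "(f k)^2 \<le> \<bar>f k\<bar> * (\<Sum>k\<in>K. \<bar>f k\<bar>)" by (simp add: power2_eq_square)
  qed
  also have "\<dots> = (\<Sum>k\<in>K. \<bar>f k\<bar>)^2" by (simp add: sum_distrib_right power2_eq_square)
  finally show ?thesis .
qed

locale setting2 = setting + assumes cX: "countable X"
begin

definition L1 where
  "L1 S Y \<nu> = (\<Sum>s\<in>S. \<Sum>y\<in>Y. \<bar>\<nu> (\<phi> s y) - \<nu> y\<bar>)"

lemma inv_in: "s \<in> carrier G \<Longrightarrow> inv s \<in> carrier G"
  using grp by (simp add: group.inv_closed)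

theorem FT:
  assumes fS: "finite S" and SG: "S \<subseteq> carrier G" and fJ: "finite J"
    and EX: "\<And>j. j\<in>J \<Longrightarrow> E j \<subseteq> X" and c: "0 < c"
  shows "\<exists>\<nu> Z0. finite Z0 \<and> Z0 \<subseteq> X \<and> (\<forall>x. x\<notin>Z0 \<longrightarrow> \<nu> x = 0) \<and> (\<forall>x. 0 \<le> \<nu> x) \<and> sum \<nu> Z0 = 1 \<and>
     (\<forall>j\<in>J. sum \<nu> (Z0 \<inter> E j) \<le> \<mu> (E j)) \<and> L1 S (Z0 \<union> (\<Union>s\<in>S. \<phi> (inv s) ` Z0)) \<nu> < c"
proof (rule ccontr)
  assume neg: "\<not> ?thesis"
  define e where "e = from_nat_into X"
  define XN where "XN N = e ` {..<N}" for N
  define YN where "YN N = XN N \<union> (\<Union>s\<in>S. \<phi> (inv s) ` XN N)" for N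
  define KN where "KN N = S \<times> YN N" for N
  define P where "P N = {\<nu>. (\<forall>x. x \<notin> XN N \<longrightarrow> \<nu> x = 0) \<and> (\<forall>x. 0 \<le> \<nu> x) \<and> sum \<nu> (XN N) = 1 \<and>
      (\<forall>j\<in>J. sum \<nu> (XN N \<inter> E j) \<le> \<mu> (E j))}" for N
  define \<Psi> where "\<Psi> \<nu> = (\<lambda>(s,y). \<nu> (\<phi> s y) - \<nu> y :: real)" for \<nu>
  have eX: "\<And>k. e k \<in> X" using X_ne by (simp add: e_def from_nat_into)
  have XN_X: "XN N \<subseteq> X" for N using eX by (auto simp: XN_def)
  have fXN: "finite (XN N)" for N by (simp add: XN_def)
  have invS: "\<And>s. s\<in>S \<Longrightarrow> inv s \<in> carrier G" using SG inv_in by blast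
  have YN_X: "YN N \<subseteq> X" for N using XN_X phi_in invS unfolding YN_def by blast
  have fYN: "finite (YN N)" for N using fXN fS by (simp add: YN_def)
  have fKN: "finite (KN N)" for N using fYN fS by (simp add: KN_def)
  have sumK: "(\<Sum>k\<in>KN N. F k) = (\<Sum>s\<in>S. \<Sum>y\<in>YN N. F (s,y))" for N and F :: "_ \<Rightarrow> real"
    unfolding KN_def by (simp add: sum.cartesian_product)
  have low: "c \<le> (\<Sum>k\<in>KN N. \<bar>\<Psi> \<nu> k\<bar>)" if nu: "\<nu> \<in> P N" for \<nu> N
  proof -
    have "c \<le> L1 S (YN N) \<nu>"
    proof (rule ccontr)
      assume "\<not> c \<le> L1 S (YN N) \<nu>"
      hence "finite (XN N) \<and> XN N \<subseteq> X \<and> (\<forall>x. x\<notin>XN N \<longrightarrow> \<nu> x = 0) \<and> (\<forall>x. 0 \<le> \<nu> x) \<and>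
         sum \<nu> (XN N) = 1 \<and> (\<forall>j\<in>J. sum \<nu> (XN N \<inter> E j) \<le> \<mu> (E j)) \<and>
         L1 S (XN N \<union> (\<Union>s\<in>S. \<phi> (inv s) ` XN N)) \<nu> < c"
        using nu fXN XN_X unfolding P_def YN_def by auto
      thus False using neg by blast
    qed
    moreover have "L1 S (YN N) \<nu> = (\<Sum>k\<in>KN N. \<bar>\<Psi> \<nu> k\<bar>)"
      by (simp add: L1_def sumK \<Psi>_def)
    ultimately show ?thesis by simp
  qed
  have up: "(\<Sum>k\<in>KN N. \<bar>\<Psi> \<nu> k\<bar>) \<le> 2 * real (card S)" if nu: "\<nu> \<in> P N" for \<nu> N
  proof -
    have z: "\<And>x. x \<notin> XN N \<Longrightarrow> \<nu> x = 0" and nn: "\<And>x. 0 \<le> \<nu> x" and s1: "sum \<nu> (XN N) = 1"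
      using nu unfolding P_def by auto
    have XY: "XN N \<subseteq> YN N" unfolding YN_def by blast
    have a: "(\<Sum>y\<in>YN N. \<nu> y) = 1"
      using s1 sum.mono_neutral_right[OF fYN XY, of \<nu>] z by auto
    have b: "(\<Sum>y\<in>YN N. \<nu> (\<phi> s y)) \<le> 1" if sS: "s \<in> S" for s
    proof -
      have sG: "s \<in> carrier G" using sS SG by blast
      have inj: "inj_on (\<phi> s) (YN N)"
        using phi_bij[OF sG] YN_X by (meson bij_betw_def inj_on_subset)
      have "(\<Sum>y\<in>YN N. \<nu> (\<phi> s y)) = (\<Sum>z\<in>\<phi> s ` YN N. \<nu> z)"
        using sum.reindex[OF inj, of \<nu>] by simp
      also have "\<dots> \<le> (\<Sum>z\<in>\<phi> s ` YN N \<union> XN N. \<nu> z)"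
        using fYN fXN nn by (intro sum_mono2) auto
      also have "\<dots> = (\<Sum>z\<in>XN N. \<nu> z)"
        using fYN fXN z by (intro sum.mono_neutral_left[symmetric]) auto
      finally show ?thesis using s1 by simp
    qed
    have "(\<Sum>k\<in>KN N. \<bar>\<Psi> \<nu> k\<bar>) = (\<Sum>s\<in>S. \<Sum>y\<in>YN N. \<bar>\<nu> (\<phi> s y) - \<nu> y\<bar>)"
      by (simp add: sumK \<Psi>_def)
    also have "\<dots> \<le> (\<Sum>s\<in>S. (\<Sum>y\<in>YN N. \<nu> (\<phi> s y)) + (\<Sum>y\<in>YN N. \<nu> y))"
    proof (intro sum_mono)
      fix s
      have "(\<Sum>y\<in>YN N. \<bar>\<nu> (\<phi> s y) - \<nu> y\<bar>) \<le> (\<Sum>y\<in>YN N. \<nu> (\<phi> s y) + \<nu> y)"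
      proof (intro sum_mono)
        fix y
        show "\<bar>\<nu> (\<phi> s y) - \<nu> y\<bar> \<le> \<nu> (\<phi> s y) + \<nu> y"
          using nn[of y] nn[of "\<phi> s y"] by linarith
      qed
      thus "(\<Sum>y\<in>YN N. \<bar>\<nu> (\<phi> s y) - \<nu> y\<bar>) \<le> (\<Sum>y\<in>YN N. \<nu> (\<phi> s y)) + (\<Sum>y\<in>YN N. \<nu> y)"
        by (simp add: sum.distrib)
    qed
    also have "\<dots> \<le> (\<Sum>s\<in>S. 2)"
      using a b by (intro sum_mono) auto
    finally show ?thesis by simp
  qed
  obtain L :: nat where L: "8 * real (card S) < c * real L" "0 < L"
  proof -
    obtain L :: nat where L0: "8 * real (card S) / c < real L" using reals_Archimedean2 by blast
    have "0 \<le> 8 * real (card S) / c" using c by simp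
    hence "0 < L" using L0 by linarith
    moreover have "8 * real (card S) < c * real L" using L0 c by (simp add: field_simps)
    ultimately show ?thesis using that by blast
  qed
  define Gr where "Gr = {of_int i / real L | i. -int L \<le> i \<and> i \<le> int L}"
  have fGr: "finite Gr" unfolding Gr_def by simp
  have Gr0: "0 \<in> Gr" unfolding Gr_def by force
  have sepN: "\<forall>N. \<exists>fr. (\<forall>k. fr k \<in> Gr) \<and> (\<forall>\<nu>\<in>P N. c/4 < (\<Sum>k\<in>KN N. fr k * \<Psi> \<nu> k))"
  proof
    fix N
    show "\<exists>fr. (\<forall>k. fr k \<in> Gr) \<and> (\<forall>\<nu>\<in>P N. c/4 < (\<Sum>k\<in>KN N. fr k * \<Psi> \<nu> k))"
    proof (cases "P N = {}")
      case True thus ?thesis using Gr0 by (intro exI[of _ "\<lambda>_. 0"]) auto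
    next
      case False
      then obtain \<nu>0 where nu0: "\<nu>0 \<in> P N" by blast
      define K where "K = KN N"
      have fK: "finite K" using fKN by (simp add: K_def)
      have Kne: "K \<noteq> {}" using low[OF nu0] c unfolding K_def by auto
      have cardK: "0 < real (card K)" using fK Kne by (simp add: card_gt_0_iff)
      define D where "D = {(\<lambda>k. \<Psi> \<nu> k - b k) | \<nu> b. \<nu> \<in> P N \<and> (\<Sum>k\<in>K. \<bar>b k\<bar>) \<le> c/2}"
      define R where "R = 2 * (2 * real (card S))^2 + 2 * (c/2)^2"
      define m where "m = (c/2)^2 / real (card K)"
      have mpos: "0 < m" using c cardK by (simp add: m_def)
      have "(\<lambda>k. \<Psi> \<nu>0 k - 0) \<in> D" unfolding D_def using nu0 c by force
      hence Dne: "D \<noteq> {}" by blast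
      have Pconv: "(\<lambda>x. (1-t) * \<nu>1 x + t * \<nu>2 x) \<in> P N"
        if "\<nu>1 \<in> P N" "\<nu>2 \<in> P N" "0 \<le> t" "t \<le> 1" for \<nu>1 \<nu>2 t
      proof -
        have A: "(\<forall>x. x \<notin> XN N \<longrightarrow> \<nu>1 x = 0) \<and> (\<forall>x. 0 \<le> \<nu>1 x) \<and> sum \<nu>1 (XN N) = 1 \<and>
           (\<forall>j\<in>J. sum \<nu>1 (XN N \<inter> E j) \<le> \<mu> (E j))" using that(1) by (simp add: P_def)
        have B: "(\<forall>x. x \<notin> XN N \<longrightarrow> \<nu>2 x = 0) \<and> (\<forall>x. 0 \<le> \<nu>2 x) \<and> sum \<nu>2 (XN N) = 1 \<and>
           (\<forall>j\<in>J. sum \<nu>2 (XN N \<inter> E j) \<le> \<mu> (E j))" using that(2) by (simp add: P_def)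
        have "\<forall>j\<in>J. (1-t) * sum \<nu>1 (XN N \<inter> E j) + t * sum \<nu>2 (XN N \<inter> E j) \<le> \<mu> (E j)"
        proof
          fix j assume "j \<in> J"
          hence "(1-t) * sum \<nu>1 (XN N \<inter> E j) \<le> (1-t) * \<mu> (E j)" "t * sum \<nu>2 (XN N \<inter> E j) \<le> t * \<mu> (E j)"
            using A B that(3,4) by (auto intro: mult_left_mono)
          thus "(1-t) * sum \<nu>1 (XN N \<inter> E j) + t * sum \<nu>2 (XN N \<inter> E j) \<le> \<mu> (E j)"
            by (simp add: algebra_simps)
        qed
        thus ?thesis using A B that(3,4)
          by (simp add: P_def sum.distrib sum_distrib_left[symmetric])
      qed
      have Psilin: "\<Psi> (\<lambda>x. (1-t) * \<nu>1 x + t * \<nu>2 x) k = (1-t) * \<Psi> \<nu>1 k + t * \<Psi> \<nu>2 k"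
        for \<nu>1 \<nu>2 t k
        by (cases k) (simp add: \<Psi>_def algebra_simps)
      have conv: "(\<lambda>k. (1-t) * u k + t * v k) \<in> D" if uD: "u \<in> D" and vD: "v \<in> D" and t0: "0 \<le> t" and t1: "t \<le> 1" for u v t
      proof -
        obtain \<nu>1 b1 where 1: "u = (\<lambda>k. \<Psi> \<nu>1 k - b1 k)" "\<nu>1 \<in> P N" "(\<Sum>k\<in>K. \<bar>b1 k\<bar>) \<le> c/2"
          using uD unfolding D_def by blast
        obtain \<nu>2 b2 where 2: "v = (\<lambda>k. \<Psi> \<nu>2 k - b2 k)" "\<nu>2 \<in> P N" "(\<Sum>k\<in>K. \<bar>b2 k\<bar>) \<le> c/2"
          using vD unfolding D_def by blast
        define b where "b = (\<lambda>k. (1-t) * b1 k + t * b2 k)"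
        have "(\<Sum>k\<in>K. \<bar>b k\<bar>) \<le> (\<Sum>k\<in>K. (1-t) * \<bar>b1 k\<bar> + t * \<bar>b2 k\<bar>)"
          unfolding b_def using t0 t1
          by (intro sum_mono) (metis abs_mult abs_of_nonneg abs_triangle_ineq diff_ge_0_iff_ge)
        also have "\<dots> = (1-t) * (\<Sum>k\<in>K. \<bar>b1 k\<bar>) + t * (\<Sum>k\<in>K. \<bar>b2 k\<bar>)"
          by (simp add: sum.distrib sum_distrib_left)
        also have "\<dots> \<le> (1-t) * (c/2) + t * (c/2)"
          using 1(3) 2(3) t0 t1 by (intro add_mono mult_left_mono) auto
        finally have bb: "(\<Sum>k\<in>K. \<bar>b k\<bar>) \<le> c/2" by (simp add: field_simps)
        have "(\<lambda>k. (1-t) * u k + t * v k) = (\<lambda>k. \<Psi> (\<lambda>x. (1-t) * \<nu>1 x + t * \<nu>2 x) k - b k)"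
          unfolding 1(1) 2(1) b_def Psilin by (simp add: algebra_simps)
        thus ?thesis unfolding D_def using Pconv[OF 1(2) 2(2) t0 t1] bb by blast
      qed
      have Rb: "(\<Sum>k\<in>K. (d k)^2) \<le> R" if dD: "d \<in> D" for d
      proof -
        obtain \<nu> b where 1: "d = (\<lambda>k. \<Psi> \<nu> k - b k)" "\<nu> \<in> P N" "(\<Sum>k\<in>K. \<bar>b k\<bar>) \<le> c/2"
          using dD unfolding D_def by blast
        have "(\<Sum>k\<in>K. (d k)^2) \<le> (\<Sum>k\<in>K. 2 * (\<Psi> \<nu> k)^2 + 2 * (b k)^2)"
          unfolding 1(1) by (intro sum_mono sq_diff_le)
        also have "\<dots> = 2 * (\<Sum>k\<in>K. (\<Psi> \<nu> k)^2) + 2 * (\<Sum>k\<in>K. (b k)^2)"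
          by (simp add: sum.distrib sum_distrib_left)
        also have "\<dots> \<le> 2 * (\<Sum>k\<in>K. \<bar>\<Psi> \<nu> k\<bar>)^2 + 2 * (\<Sum>k\<in>K. \<bar>b k\<bar>)^2"
          using sq_sum_le[OF fK] by (intro add_mono mult_left_mono) auto
        also have "\<dots> \<le> R" unfolding R_def
          using up[OF 1(2)] 1(3)
          by (intro add_mono mult_left_mono power_mono) (auto simp: K_def intro: sum_nonneg)
        finally show ?thesis .
      qed
      have mb: "m \<le> (\<Sum>k\<in>K. (d k)^2)" if dD: "d \<in> D" for d
      proof -
        obtain \<nu> b where 1: "d = (\<lambda>k. \<Psi> \<nu> k - b k)" "\<nu> \<in> P N" "(\<Sum>k\<in>K. \<bar>b k\<bar>) \<le> c/2"
          using dD unfolding D_def by blast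
        have "(\<Sum>k\<in>K. \<bar>\<Psi> \<nu> k\<bar>) \<le> (\<Sum>k\<in>K. \<bar>d k\<bar> + \<bar>b k\<bar>)"
          unfolding 1(1) by (intro sum_mono) auto
        hence "c \<le> (\<Sum>k\<in>K. \<bar>d k\<bar>) + (\<Sum>k\<in>K. \<bar>b k\<bar>)"
          using low[OF 1(2)] by (simp add: sum.distrib K_def)
        hence "c/2 \<le> (\<Sum>k\<in>K. \<bar>d k\<bar>)" using 1(3) by simp
        hence "(c/2)^2 \<le> (\<Sum>k\<in>K. \<bar>d k\<bar>)^2" using c by (intro power_mono) auto
        also have "\<dots> \<le> real (card K) * (\<Sum>k\<in>K. (d k)^2)" by (rule cs_sum[OF fK])
        finally show ?thesis unfolding m_def using cardK by (simp add: field_simps)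
      qed
      obtain p where p: "\<And>d. d \<in> D \<Longrightarrow> m/2 \<le> (\<Sum>k\<in>K. p k * d k)"
        using sep_approx[of D K R m, OF Dne conv Rb mb mpos] by blast
      have pk: "c/2 * \<bar>p k0\<bar> < (\<Sum>k\<in>K. p k * \<Psi> \<nu> k)" if nu: "\<nu> \<in> P N" and k0: "k0 \<in> K" for \<nu> k0
      proof -
        define b where "b = (\<lambda>k. if k = k0 then c/2 * sgn (p k0) else 0)"
        have "(\<Sum>k\<in>K. \<bar>b k\<bar>) = \<bar>c/2 * sgn (p k0)\<bar>"
          unfolding b_def using k0 fK by (simp add: if_distrib sum.delta cong: if_cong)
        also have "\<dots> \<le> c/2" using c by (simp add: abs_mult abs_sgn_eq)
        finally have "(\<lambda>k. \<Psi> \<nu> k - b k) \<in> D" unfolding D_def using nu by blast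
        hence "m/2 \<le> (\<Sum>k\<in>K. p k * (\<Psi> \<nu> k - b k))" by (rule p)
        also have "\<dots> = (\<Sum>k\<in>K. p k * \<Psi> \<nu> k) - (\<Sum>k\<in>K. p k * b k)"
          by (simp add: algebra_simps sum_subtractf)
        also have "(\<Sum>k\<in>K. p k * b k) = p k0 * (c/2 * sgn (p k0))"
          unfolding b_def using k0 fK by (simp add: if_distrib sum.delta cong: if_cong)
        also have "\<dots> = c/2 * \<bar>p k0\<bar>" by (simp add: abs_sgn)
        finally show ?thesis using mpos by simp
      qed
      define M where "M = Max ((\<lambda>k. \<bar>p k\<bar>) ` K)"
      have "M \<in> (\<lambda>k. \<bar>p k\<bar>) ` K" unfolding M_def using fK Kne by (intro Max_in) auto
      then obtain kM where kM: "kM \<in> K" "\<bar>p kM\<bar> = M" by auto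
      have leM: "\<And>k. k \<in> K \<Longrightarrow> \<bar>p k\<bar> \<le> M" unfolding M_def using fK by simp
      have Mpos: "0 < M"
      proof (rule ccontr)
        assume "\<not> 0 < M"
        hence "\<And>k. k \<in> K \<Longrightarrow> p k = 0" using leM by (meson abs_ge_zero abs_le_zero_iff order_trans not_less)
        hence "(\<Sum>k\<in>K. p k * \<Psi> \<nu>0 k) = 0" by simp
        thus False using pk[OF nu0 kM(1)] c by (simp add: mult_less_0_iff)
      qed
      define f where "f k = p k / M" for k
      have f1: "\<bar>f k\<bar> \<le> 1" if k: "k \<in> K" for k
      proof -
        have "\<bar>f k\<bar> = \<bar>p k\<bar> / M" using Mpos by (simp add: f_def)
        also have "\<dots> \<le> 1" using leM[OF k] Mpos by simp
        finally show ?thesis .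
      qed
      have fbig: "c/2 < (\<Sum>k\<in>K. f k * \<Psi> \<nu> k)" if nu: "\<nu> \<in> P N" for \<nu>
      proof -
        have "c/2 * M < (\<Sum>k\<in>K. p k * \<Psi> \<nu> k)" using pk[OF nu kM(1)] kM(2) by simp
        hence "c/2 < (\<Sum>k\<in>K. p k * \<Psi> \<nu> k) / M" using Mpos by (simp add: field_simps)
        thus ?thesis by (simp add: f_def sum_divide_distrib)
      qed
      define fr where "fr k = (if k \<in> K then of_int \<lfloor>f k * real L\<rfloor> / real L else 0)" for k
      have frGr: "fr k \<in> Gr" for k
      proof (cases "k \<in> K")
        case True
        have "\<bar>f k * real L\<bar> \<le> real L" using f1[OF True] by (simp add: abs_mult mult_left_le_one_le)
        hence "- int L \<le> \<lfloor>f k * real L\<rfloor> \<and> \<lfloor>f k * real L\<rfloor> \<le> int L"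
          by (auto simp: abs_le_iff floor_le_iff le_floor_iff)
        thus ?thesis unfolding fr_def Gr_def using True by auto
      qed (use Gr0 in \<open>simp add: fr_def\<close>)
      have frd: "0 \<le> f k - fr k \<and> f k - fr k \<le> 1 / real L" if k: "k \<in> K" for k
      proof -
        define a where "a = f k * real L"
        have a1: "of_int \<lfloor>a\<rfloor> \<le> a" "a < of_int \<lfloor>a\<rfloor> + 1" by linarith+
        have Lp: "0 < real L" using L(2) by simp
        have "f k - fr k = (a - of_int \<lfloor>a\<rfloor>) / real L"
          using k Lp by (simp add: fr_def a_def field_simps)
        moreover have "0 \<le> (a - of_int \<lfloor>a\<rfloor>) / real L" using a1 Lp by simp
        moreover have "(a - of_int \<lfloor>a\<rfloor>) / real L \<le> 1 / real L" using a1 Lp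
          by (intro divide_right_mono) linarith+
        ultimately show ?thesis by simp
      qed
      show ?thesis
      proof (intro exI conjI allI ballI)
        fix k show "fr k \<in> Gr" by (rule frGr)
      next
        fix \<nu> assume nu: "\<nu> \<in> P N"
        have "(\<Sum>k\<in>K. (f k - fr k) * \<Psi> \<nu> k) \<le> (\<Sum>k\<in>K. (1 / real L) * \<bar>\<Psi> \<nu> k\<bar>)"
        proof (intro sum_mono)
          fix k assume k: "k \<in> K"
          have "(f k - fr k) * \<Psi> \<nu> k \<le> (f k - fr k) * \<bar>\<Psi> \<nu> k\<bar>"
            using frd[OF k] by (intro mult_left_mono) auto
          also have "\<dots> \<le> (1 / real L) * \<bar>\<Psi> \<nu> k\<bar>" using frd[OF k] by (intro mult_right_mono) auto
          finally show "(f k - fr k) * \<Psi> \<nu> k \<le> (1 / real L) * \<bar>\<Psi> \<nu> k\<bar>" .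
        qed
        also have "\<dots> = (\<Sum>k\<in>K. \<bar>\<Psi> \<nu> k\<bar>) / real L" by (simp add: sum_divide_distrib)
        also have "\<dots> \<le> 2 * real (card S) / real L"
          using up[OF nu] L(2) by (simp add: K_def divide_right_mono)
        also have "\<dots> < c/4" using L by (simp add: field_simps)
        finally have "(\<Sum>k\<in>K. (f k - fr k) * \<Psi> \<nu> k) < c/4" .
        moreover have "(\<Sum>k\<in>K. fr k * \<Psi> \<nu> k) = (\<Sum>k\<in>K. f k * \<Psi> \<nu> k) - (\<Sum>k\<in>K. (f k - fr k) * \<Psi> \<nu> k)"
          by (simp add: algebra_simps sum_subtractf)
        ultimately show "c/4 < (\<Sum>k\<in>KN N. fr k * \<Psi> \<nu> k)" using fbig[OF nu] by (simp add: K_def)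
      qed
    qed
  qed
  then obtain FR where FR: "\<And>N k. FR N k \<in> Gr" "\<And>N \<nu>. \<nu> \<in> P N \<Longrightarrow> c/4 < (\<Sum>k\<in>KN N. FR N k * \<Psi> \<nu> k)"
    by metis
  define Gs where "Gs N y = (\<lambda>s. if s\<in>S then FR N (s,y) else 0)" for N y
  define Vals where "Vals = (\<lambda>h. \<lambda>s. if s\<in>S then h s else (0::real)) ` PiE S (\<lambda>_. Gr)"
  have fVals: "finite Vals" unfolding Vals_def using fS fGr by (simp add: finite_PiE)
  have GsV: "Gs N y \<in> Vals" for N y
  proof -
    have "restrict (\<lambda>s. FR N (s,y)) S \<in> PiE S (\<lambda>_. Gr)" using FR(1) by auto
    moreover have "Gs N y = (\<lambda>s. if s\<in>S then restrict (\<lambda>s. FR N (s,y)) S s else 0)"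
      by (auto simp: Gs_def)
    ultimately show ?thesis unfolding Vals_def by blast
  qed
  obtain g where gV: "\<forall>x\<in>X. g x \<in> Vals"
    and gA: "\<And>Z N0. finite Z \<Longrightarrow> Z \<subseteq> X \<Longrightarrow> \<exists>N\<ge>N0. \<forall>x\<in>Z. Gs N x = g x"
    using diag[OF cX fVals, of Gs] GsV by metis
  define \<tau> where "\<tau> x = (restrict (\<lambda>j. x \<in> E j) J, restrict (\<lambda>s. g x s) S,
      restrict (\<lambda>s. g (\<phi> (inv s) x) s) S)" for x
  define T where "T = \<tau> ` X"
  have gGr: "g x s \<in> Gr" if xX: "x \<in> X" and sS: "s \<in> S" for x s
  proof -
    have "g x \<in> Vals" using gV xX by blast
    then obtain h where "h \<in> PiE S (\<lambda>_. Gr)" "g x = (\<lambda>s. if s\<in>S then h s else 0)"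
      unfolding Vals_def by blast
    thus ?thesis using sS by auto
  qed
  have fT: "finite T"
  proof -
    have "\<tau> x \<in> PiE J (\<lambda>_. UNIV :: bool set) \<times> PiE S (\<lambda>_. Gr) \<times> PiE S (\<lambda>_. Gr)"
      if x: "x \<in> X" for x
    proof -
      have "restrict (\<lambda>s. g x s) S \<in> PiE S (\<lambda>_. Gr)" using gGr[OF x] by simp
      moreover have "restrict (\<lambda>s. g (\<phi> (inv s) x) s) S \<in> PiE S (\<lambda>_. Gr)"
        using gGr phi_in[OF invS x] by simp
      ultimately show ?thesis unfolding \<tau>_def by simp
    qed
    hence "T \<subseteq> PiE J (\<lambda>_. UNIV :: bool set) \<times> PiE S (\<lambda>_. Gr) \<times> PiE S (\<lambda>_. Gr)"
      unfolding T_def by blast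
    moreover have "finite (PiE J (\<lambda>_. UNIV :: bool set) \<times> PiE S (\<lambda>_. Gr) \<times> PiE S (\<lambda>_. Gr))"
      using fJ fS fGr by (simp add: finite_PiE)
    ultimately show ?thesis by (rule finite_subset)
  qed
  define a where "a t = {x\<in>X. \<tau> x = t}" for t
  define rep where "rep t = (SOME x. x \<in> X \<and> \<tau> x = t)" for t
  have rep: "rep t \<in> X \<and> \<tau> (rep t) = t" if "t \<in> T" for t
    unfolding rep_def by (rule someI_ex) (use that in \<open>auto simp: T_def\<close>)
  have rep_inj: "inj_on rep T"
  proof (rule inj_onI)
    fix t t' assume "t \<in> T" "t' \<in> T" "rep t = rep t'"
    thus "t = t'" using rep[of t] rep[of t'] by metis
  qed
  define Z0 where "Z0 = rep ` T"
  have fZ0: "finite Z0" using fT by (simp add: Z0_def)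
  have Z0X: "Z0 \<subseteq> X" using rep by (auto simp: Z0_def)
  define \<nu> where "\<nu> z = (\<Sum>t\<in>T. if rep t = z then \<mu> (a t) else 0)" for z
  have nu_rep: "\<nu> (rep t) = \<mu> (a t)" if "t \<in> T" for t
  proof -
    have "\<nu> (rep t) = (\<Sum>t'\<in>T. if t' = t then \<mu> (a t') else 0)"
      unfolding \<nu>_def using rep_inj that by (intro sum.cong refl) (auto dest: inj_onD)
    thus ?thesis using fT that by simp
  qed
  have nu0: "\<nu> z = 0" if "z \<notin> Z0" for z
    using that unfolding \<nu>_def Z0_def by (intro sum.neutral) auto
  have aX: "a t \<subseteq> X" for t by (auto simp: a_def)
  have nunn: "0 \<le> \<nu> z" for z unfolding \<nu>_def using mu_nonneg[OF aX] by (intro sum_nonneg) auto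
  have sum_rep: "(\<Sum>z\<in>Z0. \<nu> z * F z) = (\<Sum>t\<in>T. \<mu> (a t) * F (rep t))" for F
    unfolding Z0_def using rep_inj nu_rep by (simp add: sum.reindex)
  have adisj: "\<And>s t. s\<in>T' \<Longrightarrow> t\<in>T' \<Longrightarrow> s \<noteq> t \<Longrightarrow> a s \<inter> a t = {}" for T'
    by (auto simp: a_def)
  have sum1: "sum \<nu> Z0 = 1"
  proof -
    have "sum \<nu> Z0 = (\<Sum>t\<in>T. \<mu> (a t))" using sum_rep[of "\<lambda>_. 1"] by simp
    also have "\<dots> = \<mu> (\<Union>t\<in>T. a t)" using fT aX adisj by (intro mu_Union[symmetric]) auto
    also have "(\<Union>t\<in>T. a t) = X" by (auto simp: a_def T_def)
    finally show ?thesis using mu_X by simp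
  qed
  have sumE: "sum \<nu> (Z0 \<inter> E j) = \<mu> (E j)" if j: "j \<in> J" for j
  proof -
    define Tj where "Tj = {t\<in>T. fst t j}"
    have fTj: "finite Tj" using fT by (simp add: Tj_def)
    have eqZ: "Z0 \<inter> E j = rep ` Tj"
    proof -
      have "rep t \<in> E j \<longleftrightarrow> fst t j" if "t \<in> T" for t
        using rep[OF that] j by (metis (no_types, lifting) \<tau>_def fstI restrict_apply')
      thus ?thesis unfolding Z0_def Tj_def by auto
    qed
    have "sum \<nu> (Z0 \<inter> E j) = (\<Sum>t\<in>Tj. \<nu> (rep t))"
    proof -
      have "inj_on rep Tj" using rep_inj by (rule inj_on_subset) (auto simp: Tj_def)
      thus ?thesis unfolding eqZ by (simp add: sum.reindex)
    qed
    also have "\<dots> = (\<Sum>t\<in>Tj. \<mu> (a t))" using nu_rep by (simp add: Tj_def)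
    also have "\<dots> = \<mu> (\<Union>t\<in>Tj. a t)" using fTj aX adisj by (intro mu_Union[symmetric]) auto
    also have "(\<Union>t\<in>Tj. a t) = E j"
    proof
      have fstt: "fst (\<tau> x) j = (x \<in> E j)" for x using j by (simp add: \<tau>_def)
      show "(\<Union>t\<in>Tj. a t) \<subseteq> E j"
      proof
        fix x assume "x \<in> (\<Union>t\<in>Tj. a t)"
        then obtain t where "t \<in> Tj" "x \<in> a t" by blast
        hence "fst (\<tau> x) j" by (simp add: a_def Tj_def)
        thus "x \<in> E j" using fstt by simp
      qed
      show "E j \<subseteq> (\<Union>t\<in>Tj. a t)"
      proof
        fix x assume x: "x \<in> E j"
        hence xX: "x \<in> X" using EX[OF j] by blast
        have "\<tau> x \<in> Tj" using x xX fstt by (simp add: Tj_def T_def)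
        moreover have "x \<in> a (\<tau> x)" using xX by (simp add: a_def)
        ultimately show "x \<in> (\<Union>t\<in>Tj. a t)" by blast
      qed
    qed
    finally show ?thesis .
  qed
  define Z' where "Z' = Z0 \<union> (\<Union>s\<in>S. \<phi> (inv s) ` Z0)"
  have fZ': "finite Z'" using fZ0 fS by (simp add: Z'_def)
  have Z'X: "Z' \<subseteq> X" using Z0X phi_in invS unfolding Z'_def by blast
  define N1 where "N1 = Suc (Max (insert 0 (to_nat_on X ` Z0)))"
  have Z0N1: "Z0 \<subseteq> XN N" if "N1 \<le> N" for N
  proof
    fix z assume z: "z \<in> Z0"
    have "to_nat_on X z \<le> Max (insert 0 (to_nat_on X ` Z0))" using fZ0 z by simp
    hence "to_nat_on X z < N" using that unfolding N1_def by linarith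
    moreover have "e (to_nat_on X z) = z" unfolding e_def using cX Z0X z
      by (simp add: from_nat_into_to_nat_on subsetD)
    ultimately show "z \<in> XN N" unfolding XN_def by force
  qed
  obtain N where N: "N1 \<le> N" "\<And>x. x \<in> Z' \<Longrightarrow> Gs N x = g x"
    using gA[OF fZ' Z'X, of N1] by blast
  have Z0N: "Z0 \<subseteq> XN N" using Z0N1[OF N(1)] .
  have nuP: "\<nu> \<in> P N"
  proof -
    have "sum \<nu> (XN N) = sum \<nu> Z0"
      by (rule sum.mono_neutral_right[OF fXN Z0N]) (use nu0 in auto)
    moreover have "sum \<nu> (XN N \<inter> E j) = sum \<nu> (Z0 \<inter> E j)" for j
      by (rule sum.mono_neutral_right) (use nu0 fXN Z0N in auto)
    moreover have "\<forall>x. x \<notin> XN N \<longrightarrow> \<nu> x = 0" using nu0 Z0N by blast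
    ultimately show ?thesis unfolding P_def using nunn sum1 sumE by auto
  qed
  have key: "(\<Sum>y\<in>YN N. FR N (s,y) * (\<nu> (\<phi> s y) - \<nu> y)) =
      (\<Sum>t\<in>T. \<mu> (a t) * g (\<phi> (inv s) (rep t)) s) - (\<Sum>t\<in>T. \<mu> (a t) * g (rep t) s)"
    if sS: "s \<in> S" for s
  proof -
    have sG: "s \<in> carrier G" using sS SG by blast
    have isG: "inv s \<in> carrier G" using invS[OF sS] .
    have Z'Y: "Z' \<subseteq> YN N" using Z0N sS unfolding Z'_def YN_def by blast
    have zout: "\<nu> (\<phi> s y) = 0" if "y \<in> X" "y \<notin> \<phi> (inv s) ` Z0" for y
    proof (rule nu0)
      show "\<phi> s y \<notin> Z0"
      proof
        assume "\<phi> s y \<in> Z0"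
        moreover have "y = \<phi> (inv s) (\<phi> s y)" using phi_inv2[OF sG that(1)] by simp
        ultimately show False using that(2) by blast
      qed
    qed
    have "(\<Sum>y\<in>YN N. FR N (s,y) * (\<nu> (\<phi> s y) - \<nu> y)) = (\<Sum>y\<in>Z'. FR N (s,y) * (\<nu> (\<phi> s y) - \<nu> y))"
    proof (rule sum.mono_neutral_right[OF fYN Z'Y], intro ballI)
      fix y assume y: "y \<in> YN N - Z'"
      hence "y \<in> X" "y \<notin> Z0" "y \<notin> \<phi> (inv s) ` Z0" using YN_X sS unfolding Z'_def by auto
      thus "FR N (s,y) * (\<nu> (\<phi> s y) - \<nu> y) = 0" using zout nu0 by simp
    qed
    also have "\<dots> = (\<Sum>y\<in>Z'. g y s * \<nu> (\<phi> s y)) - (\<Sum>y\<in>Z'. g y s * \<nu> y)"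
    proof -
      have "\<And>y. y \<in> Z' \<Longrightarrow> FR N (s,y) = g y s" using N(2) sS by (metis Gs_def)
      thus ?thesis by (simp add: algebra_simps sum_subtractf)
    qed
    also have "(\<Sum>y\<in>Z'. g y s * \<nu> y) = (\<Sum>z\<in>Z0. \<nu> z * g z s)"
    proof -
      have "(\<Sum>y\<in>Z'. g y s * \<nu> y) = (\<Sum>y\<in>Z0. g y s * \<nu> y)"
        by (rule sum.mono_neutral_right[OF fZ']) (use nu0 in \<open>auto simp: Z'_def\<close>)
      thus ?thesis by (simp add: mult.commute)
    qed
    also have "(\<Sum>y\<in>Z'. g y s * \<nu> (\<phi> s y)) = (\<Sum>y\<in>\<phi> (inv s) ` Z0. g y s * \<nu> (\<phi> s y))"
    proof (rule sum.mono_neutral_right[OF fZ'])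
      show "\<phi> (inv s) ` Z0 \<subseteq> Z'" using sS unfolding Z'_def by blast
      show "\<forall>y\<in>Z' - \<phi> (inv s) ` Z0. g y s * \<nu> (\<phi> s y) = 0" using zout Z'X by auto
    qed
    also have "\<dots> = (\<Sum>z\<in>Z0. g (\<phi> (inv s) z) s * \<nu> (\<phi> s (\<phi> (inv s) z)))"
    proof -
      have "inj_on (\<phi> (inv s)) Z0"
        using phi_bij[OF isG] Z0X by (meson bij_betw_def inj_on_subset)
      thus ?thesis by (simp add: sum.reindex)
    qed
    also have "\<dots> = (\<Sum>z\<in>Z0. \<nu> z * g (\<phi> (inv s) z) s)"
      using phi_inv[OF sG] Z0X by (intro sum.cong refl) (auto simp: mult.commute)
    finally show ?thesis unfolding sum_rep .
  qed
  have zero_s: "(\<Sum>t\<in>T. \<mu> (a t) * g (\<phi> (inv s) (rep t)) s) = (\<Sum>t\<in>T. \<mu> (a t) * g (rep t) s)"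
    if sS: "s \<in> S" for s
  proof -
    have sG: "s \<in> carrier G" using sS SG by blast
    have fT': "finite (\<tau> ` X)" using fT by (simp add: T_def)
    have "(\<Sum>t\<in>T. \<mu> (a t) * g (rep t) s) = (\<Sum>t\<in>\<tau>`X. (\<lambda>t. fst (snd t) s) t * \<mu> {x\<in>X. \<tau> x = t})"
      unfolding T_def a_def
      by (intro sum.cong refl) (metis (no_types, lifting) T_def \<tau>_def fstI sndI rep restrict_apply' sS mult.commute)
    also have "\<dots> = I (\<lambda>x. (\<lambda>t. fst (snd t) s) (\<tau> x))" by (rule I_types[OF fT', symmetric])
    also have "(\<lambda>x. (\<lambda>t. fst (snd t) s) (\<tau> x)) = (\<lambda>x. g x s)" using sS by (simp add: \<tau>_def)
    finally have 1: "(\<Sum>t\<in>T. \<mu> (a t) * g (rep t) s) = I (\<lambda>x. g x s)" .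
    have "(\<Sum>t\<in>T. \<mu> (a t) * g (\<phi> (inv s) (rep t)) s) = (\<Sum>t\<in>\<tau>`X. (\<lambda>t. snd (snd t) s) t * \<mu> {x\<in>X. \<tau> x = t})"
      unfolding T_def a_def
      by (intro sum.cong refl) (metis (no_types, lifting) T_def \<tau>_def sndI rep restrict_apply' sS mult.commute)
    also have "\<dots> = I (\<lambda>x. (\<lambda>t. snd (snd t) s) (\<tau> x))" by (rule I_types[OF fT', symmetric])
    also have "(\<lambda>x. (\<lambda>t. snd (snd t) s) (\<tau> x)) = (\<lambda>x. (\<lambda>y. g y s) (\<phi> (inv s) x))" using sS by (simp add: \<tau>_def)
    also have "I \<dots> = I (\<lambda>y. g y s)" by (rule I_inv[OF sG])
    finally show ?thesis using 1 by simp
  qed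
  have "c/4 < (\<Sum>k\<in>KN N. FR N k * \<Psi> \<nu> k)" by (rule FR(2)[OF nuP])
  also have "\<dots> = (\<Sum>s\<in>S. \<Sum>y\<in>YN N. FR N (s,y) * (\<nu> (\<phi> s y) - \<nu> y))"
    by (simp add: sumK \<Psi>_def)
  also have "\<dots> = 0" using key zero_s by simp
  finally show False using c by simp
qed

end

lemma extend_bij:
  assumes fV: "finite V" and DV: "D \<subseteq> V" and inj: "inj_on f D" and fD: "f ` D \<subseteq> V"
  shows "\<exists>h. bij_betw h V V \<and> (\<forall>v\<in>D. h v = f v)"
proof -
  have fD': "finite D" using fV DV by (rule finite_subset[rotated])
  have c: "card (f ` D) = card D" using inj by (simp add: card_image)
  have "card (V - D) = card (V - f ` D)"
    using fV DV fD c fD' by (simp add: card_Diff_subset)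
  then obtain b where b: "bij_betw b (V - D) (V - f ` D)"
    using fV by (meson finite_Diff finite_same_card_bij)
  define h where "h v = (if v \<in> D then f v else b v)" for v
  have "bij_betw h V V"
  proof -
    have "bij_betw h (D \<union> (V - D)) (f ` D \<union> (V - f ` D))"
    proof (rule bij_betw_combine)
      show "bij_betw h D (f ` D)" using inj unfolding h_def
        by (simp add: bij_betw_def inj_on_def)
      show "bij_betw h (V - D) (V - f ` D)" using b unfolding h_def
        by (rule bij_betw_cong[THEN iffD1, rotated]) auto
      show "f ` D \<inter> (V - f ` D) = {}" by blast
    qed
    moreover have "D \<union> (V - D) = V" "f ` D \<union> (V - f ` D) = V" using DV fD by auto
    ultimately show ?thesis by simp
  qed
  thus ?thesis unfolding h_def by auto
qed

lemma bij_PiE_map: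
  assumes h: "bij_betw h A A"
  shows "bij_betw (\<lambda>v. restrict (\<lambda>i. h (v i)) I) (PiE I (\<lambda>_. A)) (PiE I (\<lambda>_. A))"
proof -
  have hA: "\<And>a. a \<in> A \<Longrightarrow> h a \<in> A" using h by (auto simp: bij_betw_def)
  have injh: "inj_on h A" using h by (simp add: bij_betw_def)
  show ?thesis unfolding bij_betw_def
  proof
    show "inj_on (\<lambda>v. restrict (\<lambda>i. h (v i)) I) (PiE I (\<lambda>_. A))"
    proof (rule inj_onI)
      fix v v' assume v: "v \<in> PiE I (\<lambda>_. A)" and v': "v' \<in> PiE I (\<lambda>_. A)"
        and eq: "restrict (\<lambda>i. h (v i)) I = restrict (\<lambda>i. h (v' i)) I"
      show "v = v'"
      proof (rule PiE_ext[OF v v'])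
        fix i assume i: "i \<in> I"
        have "h (v i) = h (v' i)" using fun_cong[OF eq, of i] i by simp
        thus "v i = v' i" using injh v v' i by (auto dest: inj_onD)
      qed
    qed
  next
    show "(\<lambda>v. restrict (\<lambda>i. h (v i)) I) ` PiE I (\<lambda>_. A) = PiE I (\<lambda>_. A)"
    proof
      show "(\<lambda>v. restrict (\<lambda>i. h (v i)) I) ` PiE I (\<lambda>_. A) \<subseteq> PiE I (\<lambda>_. A)"
        using hA by (auto simp: PiE_iff)
    next
      show "PiE I (\<lambda>_. A) \<subseteq> (\<lambda>v. restrict (\<lambda>i. h (v i)) I) ` PiE I (\<lambda>_. A)"
      proof
        fix u assume u: "u \<in> PiE I (\<lambda>_. A)"
        define v where "v = restrict (\<lambda>i. inv_into A h (u i)) I"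
        have vA: "v \<in> PiE I (\<lambda>_. A)" unfolding v_def using u h
          by (auto simp: bij_betw_def PiE_iff intro!: inv_into_into)
        have "restrict (\<lambda>i. h (v i)) I = u"
        proof (rule PiE_ext[OF _ u])
          show "restrict (\<lambda>i. h (v i)) I \<in> PiE I (\<lambda>_. A)" using vA hA by auto
          fix i assume "i \<in> I"
          thus "restrict (\<lambda>i. h (v i)) I i = u i" unfolding v_def using u h
            by (auto simp: bij_betw_def PiE_iff intro!: f_inv_into_f)
        qed
        thus "u \<in> (\<lambda>v. restrict (\<lambda>i. h (v i)) I) ` PiE I (\<lambda>_. A)" using vA by force
      qed
    qed
  qed
qed

lemma PiE_fixed:
  "{v \<in> PiE I (\<lambda>_. A). restrict (\<lambda>i. h (v i)) I = v} = PiE I (\<lambda>_. {u\<in>A. h u = u})"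
proof
  show "{v \<in> PiE I (\<lambda>_. A). restrict (\<lambda>i. h (v i)) I = v} \<subseteq> PiE I (\<lambda>_. {u\<in>A. h u = u})"
  proof
    fix v assume "v \<in> {v \<in> PiE I (\<lambda>_. A). restrict (\<lambda>i. h (v i)) I = v}"
    hence v: "v \<in> PiE I (\<lambda>_. A)" "restrict (\<lambda>i. h (v i)) I = v" by auto
    have "\<And>i. i \<in> I \<Longrightarrow> h (v i) = v i" using fun_cong[OF v(2)] by (metis restrict_apply')
    thus "v \<in> PiE I (\<lambda>_. {u\<in>A. h u = u})" using v(1) by auto
  qed
next
  show "PiE I (\<lambda>_. {u\<in>A. h u = u}) \<subseteq> {v \<in> PiE I (\<lambda>_. A). restrict (\<lambda>i. h (v i)) I = v}"
  proof
    fix v assume v: "v \<in> PiE I (\<lambda>_. {u\<in>A. h u = u})"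
    hence vA: "v \<in> PiE I (\<lambda>_. A)" by auto
    have "restrict (\<lambda>i. h (v i)) I = v"
      by (rule PiE_ext[of _ I "\<lambda>_. A"]) (use v vA in \<open>auto simp: PiE_iff\<close>)
    thus "v \<in> {v \<in> PiE I (\<lambda>_. A). restrict (\<lambda>i. h (v i)) I = v}" using vA by simp
  qed
qed

lemma card_slice:
  assumes "finite I" "i \<in> I" "B \<subseteq> A"
  shows "card {v\<in>PiE I (\<lambda>_. A). v i \<in> B} = card B * card A ^ (card I - 1)"
proof -
  have "{v\<in>PiE I (\<lambda>_. A). v i \<in> B} = PiE I (\<lambda>j. if j = i then B else A)"
  proof
    show "{v\<in>PiE I (\<lambda>_. A). v i \<in> B} \<subseteq> PiE I (\<lambda>j. if j = i then B else A)"
      by (auto simp: PiE_iff extensional_def)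
    show "PiE I (\<lambda>j. if j = i then B else A) \<subseteq> {v\<in>PiE I (\<lambda>_. A). v i \<in> B}"
    proof
      fix v assume v: "v \<in> PiE I (\<lambda>j. if j = i then B else A)"
      have "v \<in> PiE I (\<lambda>_. A)" using v assms(3) unfolding PiE_iff by (metis subsetD)
      moreover have "v i \<in> B" using v assms(2) unfolding PiE_iff by (metis (full_types))
      ultimately show "v \<in> {v\<in>PiE I (\<lambda>_. A). v i \<in> B}" by simp
    qed
  qed
  hence "card {v\<in>PiE I (\<lambda>_. A). v i \<in> B} = (\<Prod>j\<in>I. card (if j = i then B else A))"
    using assms(1) by (simp add: card_PiE)
  also have "\<dots> = card B * (\<Prod>j\<in>I - {i}. card (if j = i then B else A))"
    using assms(1,2) by (simp add: prod.remove)
  also have "(\<Prod>j\<in>I - {i}. card (if j = i then B else A)) = (\<Prod>j\<in>I - {i}. card A)"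
    by (intro prod.cong) auto
  also have "\<dots> = card A ^ (card I - 1)" using assms(1,2) by simp
  finally show ?thesis .
qed


lemma card_transfer:
  assumes e: "bij_betw e A V'"
  shows "card {n\<in>A. Q (e n)} = card {v\<in>V'. Q v}"
proof -
  have "inj_on e {n\<in>A. Q (e n)}" using e by (auto simp: bij_betw_def intro: inj_on_subset)
  moreover have "e ` {n\<in>A. Q (e n)} = {v\<in>V'. Q v}" using e by (auto simp: bij_betw_def)
  ultimately show ?thesis by (metis card_image)
qed

lemma transfer_nat:
  fixes G :: "('a,'c) monoid_scheme" and \<sigma>' :: "'a \<Rightarrow> 'v \<Rightarrow> 'v"
  assumes fV: "finite V'" "V' \<noteq> {}" and bij: "\<forall>g\<in>carrier G. bij_betw (\<sigma>' g) V' V'"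
   and prodG: "\<forall>g\<in>F. \<forall>h\<in>F. g \<otimes>\<^bsub>G\<^esub> h \<in> carrier G" and FG: "F \<subseteq> carrier G"
   and mult: "\<forall>g\<in>F. \<forall>h\<in>F. real (card {v\<in>V'. \<sigma>' (g \<otimes>\<^bsub>G\<^esub> h) v = \<sigma>' g (\<sigma>' h v)}) \<ge> (1-\<epsilon>) * real (card V')"
   and nf: "\<forall>g\<in>F. g \<noteq> \<one>\<^bsub>G\<^esub> \<longrightarrow> real (card {v\<in>V'. \<sigma>' g v \<noteq> v}) \<ge> (1-\<epsilon>) * real (card V')"
  shows "\<exists>(V::nat set) (\<sigma>::'a \<Rightarrow> nat \<Rightarrow> nat).
           finite V \<and> V \<noteq> {} \<and>
           (\<forall>g \<in> carrier G. bij_betw (\<sigma> g) V V) \<and>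
           (\<forall>g \<in> F. \<forall>h \<in> F.
              real (card {v \<in> V. \<sigma> (g \<otimes>\<^bsub>G\<^esub> h) v = \<sigma> g (\<sigma> h v)}) \<ge> (1 - \<epsilon>) * real (card V)) \<and>
           (\<forall>g \<in> F. g \<noteq> \<one>\<^bsub>G\<^esub> \<longrightarrow>
              real (card {v \<in> V. \<sigma> g v \<noteq> v}) \<ge> (1 - \<epsilon>) * real (card V))"
proof -
  define A where "A = {0..<card V'}"
  obtain e where e: "bij_betw e A V'" unfolding A_def using fV(1) ex_bij_betw_nat_finite by blast
  define ei where "ei = inv_into A e"
  have ei: "bij_betw ei V' A" unfolding ei_def using e by (rule bij_betw_inv_into)
  have e_ei: "\<And>v. v \<in> V' \<Longrightarrow> e (ei v) = v" unfolding ei_def using e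
    by (simp add: bij_betw_inv_into_right)
  have ei_inj: "\<And>a b. a \<in> V' \<Longrightarrow> b \<in> V' \<Longrightarrow> ei a = ei b \<longleftrightarrow> a = b"
    using ei by (auto simp: bij_betw_def dest: inj_onD)
  have eA: "\<And>n. n \<in> A \<Longrightarrow> e n \<in> V'" using e by (auto simp: bij_betw_def)
  have s'V: "\<And>g v. g \<in> carrier G \<Longrightarrow> v \<in> V' \<Longrightarrow> \<sigma>' g v \<in> V'" using bij by (auto simp: bij_betw_def)
  define \<sigma> where "\<sigma> g n = ei (\<sigma>' g (e n))" for g n
  have cardA: "card A = card V'" by (simp add: A_def)
  show ?thesis
  proof (intro exI conjI ballI impI)
    show "finite A" by (simp add: A_def)
    show "A \<noteq> {}" using fV by (simp add: A_def)
  next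
    fix g assume g: "g \<in> carrier G"
    have "bij_betw (ei \<circ> \<sigma>' g \<circ> e) A A"
      using bij_betw_trans[OF bij_betw_trans[OF e bij[rule_format, OF g]] ei] by (simp add: comp_assoc)
    thus "bij_betw (\<sigma> g) A A" by (rule bij_betw_cong[THEN iffD2, rotated]) (simp add: \<sigma>_def)
  next
    fix g h assume g: "g \<in> F" and h: "h \<in> F"
    have gG: "g \<in> carrier G" and hG: "h \<in> carrier G" and ghG: "g \<otimes>\<^bsub>G\<^esub> h \<in> carrier G"
      using g h FG prodG by auto
    have "{n\<in>A. \<sigma> (g \<otimes>\<^bsub>G\<^esub> h) n = \<sigma> g (\<sigma> h n)} = {n\<in>A. (\<lambda>v. \<sigma>' (g \<otimes>\<^bsub>G\<^esub> h) v = \<sigma>' g (\<sigma>' h v)) (e n)}"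
    proof (intro Collect_cong conj_cong refl)
      fix n assume n: "n \<in> A"
      have "\<sigma> g (\<sigma> h n) = ei (\<sigma>' g (\<sigma>' h (e n)))"
        unfolding \<sigma>_def using e_ei s'V[OF hG eA[OF n]] by simp
      thus "(\<sigma> (g \<otimes>\<^bsub>G\<^esub> h) n = \<sigma> g (\<sigma> h n)) = (\<sigma>' (g \<otimes>\<^bsub>G\<^esub> h) (e n) = \<sigma>' g (\<sigma>' h (e n)))"
        unfolding \<sigma>_def using ei_inj s'V eA[OF n] gG hG ghG by simp
    qed
    hence "card {n\<in>A. \<sigma> (g \<otimes>\<^bsub>G\<^esub> h) n = \<sigma> g (\<sigma> h n)} = card {v\<in>V'. \<sigma>' (g \<otimes>\<^bsub>G\<^esub> h) v = \<sigma>' g (\<sigma>' h v)}"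
      using card_transfer[OF e] by simp
    thus "(1 - \<epsilon>) * real (card A) \<le> real (card {n\<in>A. \<sigma> (g \<otimes>\<^bsub>G\<^esub> h) n = \<sigma> g (\<sigma> h n)})"
      using mult g h cardA by simp
  next
    fix g assume g: "g \<in> F" and g1: "g \<noteq> \<one>\<^bsub>G\<^esub>"
    have gG: "g \<in> carrier G" using g FG by auto
    have "{n\<in>A. \<sigma> g n \<noteq> n} = {n\<in>A. (\<lambda>v. \<sigma>' g v \<noteq> v) (e n)}"
    proof (intro Collect_cong conj_cong refl)
      fix n assume n: "n \<in> A"
      have "n = ei (e n)" unfolding ei_def using e n by (simp add: bij_betw_def)
      hence "(\<sigma> g n \<noteq> n) = (ei (\<sigma>' g (e n)) \<noteq> ei (e n))" unfolding \<sigma>_def by simp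
      thus "(\<sigma> g n \<noteq> n) = (\<sigma>' g (e n) \<noteq> e n)" using ei_inj s'V[OF gG eA[OF n]] eA[OF n] by simp
    qed
    hence "card {n\<in>A. \<sigma> g n \<noteq> n} = card {v\<in>V'. \<sigma>' g v \<noteq> v}" using card_transfer[OF e] by simp
    thus "(1 - \<epsilon>) * real (card A) \<le> real (card {n\<in>A. \<sigma> g n \<noteq> n})"
      using nf g g1 cardA by simp
  qed
qed

lemma card_split:
  assumes "finite V"
  shows "card {v\<in>V. P v} + card {v\<in>V. \<not> P v} = card V"
proof -
  have "{v\<in>V. P v} \<union> {v\<in>V. \<not> P v} = V" by auto
  moreover have "{v\<in>V. P v} \<inter> {v\<in>V. \<not> P v} = {}" by auto
  ultimately show ?thesis using assms by (metis (no_types, lifting) card_Un_disjoint finite_Un)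
qed

context setting2
begin

lemma L1_each:
  assumes "finite S" "s \<in> S"
  shows "(\<Sum>y\<in>Y. \<bar>(\<nu> :: _ \<Rightarrow> real) (\<phi> s y) - \<nu> y\<bar>) \<le> L1 S Y \<nu>"
  unfolding L1_def
  by (rule member_le_sum[of s S "\<lambda>s. \<Sum>y\<in>Y. \<bar>\<nu> (\<phi> s y) - \<nu> y\<bar>"]) (use assms in \<open>auto intro: sum_nonneg\<close>)

theorem main:
  assumes sf: "strongly_faithful G X \<phi> \<mu>"
  shows "sofic G"
  unfolding sofic_def
proof (intro allI impI)
  fix F and \<epsilon> :: real
  assume FG: "F \<subseteq> carrier G" and fF: "finite F" and eps: "\<epsilon> > 0"
  define F1 where "F1 = F - {\<one>}"
  define Fx where "Fx g = {x\<in>X. \<phi> g x = x}" for g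
  define q where "q = Max (insert 0 ((\<lambda>g. \<mu> (Fx g)) ` F1))"
  have fF1: "finite F1" using fF by (simp add: F1_def)
  have q0: "0 \<le> q" unfolding q_def using fF1 by simp
  have qg: "\<mu> (Fx g) \<le> q" if "g \<in> F1" for g unfolding q_def using fF1 that by simp
  have q1: "q < 1"
  proof -
    have "q \<in> insert 0 ((\<lambda>g. \<mu> (Fx g)) ` F1)" unfolding q_def using fF1 by (intro Max_in) auto
    moreover have "\<mu> (Fx g) < 1" if "g \<in> F1" for g
      using sf that FG unfolding strongly_faithful_def F1_def Fx_def by auto
    ultimately show ?thesis by auto
  qed
  define r where "r = (1+q)/2"
  have r: "0 < r" "r < 1" using q0 q1 by (auto simp: r_def)
  obtain n0 where n0: "r^n0 < \<epsilon>" using real_arch_pow_inv[OF eps r(2)] by blast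
  define n where "n = Suc n0"
  have rn: "r^n \<le> \<epsilon>"
  proof -
    have "r^n = r * r^n0" by (simp add: n_def)
    also have "\<dots> \<le> r^n0" using r by (simp add: mult_left_le_one_le)
    finally show ?thesis using n0 by simp
  qed
  have npos: "0 < n" by (simp add: n_def)
  define c where "c = min (min ((1-q)/8) (\<epsilon>/(8*real n))) (1/2)"
  have c: "0 < c" "c \<le> (1-q)/8" "c \<le> \<epsilon>/(8*real n)" "c \<le> 1/2"
  proof -
    show "0 < c" using q1 eps npos unfolding c_def by simp
    show "c \<le> (1-q)/8" unfolding c_def by (meson min.cobounded1 order_trans)
    show "c \<le> \<epsilon>/(8*real n)" unfolding c_def by (meson min.cobounded1 min.cobounded2 order_trans)
    show "c \<le> 1/2" unfolding c_def by (rule min.cobounded2)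
  qed
  define S where "S = F \<union> (\<lambda>(g,h). g \<otimes> h) ` (F \<times> F)"
  have fS: "finite S" using fF by (simp add: S_def)
  have SG: "S \<subseteq> carrier G" using FG grp unfolding S_def by (auto intro: monoid.m_closed group.is_monoid)
  have FS: "F \<subseteq> S" and FFS: "\<And>g h. g \<in> F \<Longrightarrow> h \<in> F \<Longrightarrow> g \<otimes> h \<in> S" unfolding S_def by auto
  have FxX: "\<And>g. g \<in> F1 \<Longrightarrow> Fx g \<subseteq> X" by (auto simp: Fx_def)
  have "\<exists>\<nu> Z0. finite Z0 \<and> Z0 \<subseteq> X \<and> (\<forall>x. x\<notin>Z0 \<longrightarrow> \<nu> x = 0) \<and>
     (\<forall>x. 0 \<le> \<nu> x) \<and> sum \<nu> Z0 = 1 \<and>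
     (\<forall>j\<in>F1. sum \<nu> (Z0 \<inter> Fx j) \<le> \<mu> (Fx j)) \<and> L1 S (Z0 \<union> (\<Union>s\<in>S. \<phi> (inv s) ` Z0)) \<nu> < c"
    by (rule FT[OF fS SG fF1]) (use FxX c in auto)
  then obtain \<nu> Z0 where H: "finite Z0 \<and> Z0 \<subseteq> X \<and> (\<forall>x. x\<notin>Z0 \<longrightarrow> \<nu> x = 0) \<and>
     (\<forall>x. 0 \<le> \<nu> x) \<and> sum \<nu> Z0 = 1 \<and>
     (\<forall>j\<in>F1. sum \<nu> (Z0 \<inter> Fx j) \<le> \<mu> (Fx j)) \<and> L1 S (Z0 \<union> (\<Union>s\<in>S. \<phi> (inv s) ` Z0)) \<nu> < c"
    by (elim exE)
  have fZ0: "finite Z0" and Z0X: "Z0 \<subseteq> X" and nu0: "\<forall>x. x\<notin>Z0 \<longrightarrow> \<nu> x = 0"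
    and nunn: "\<forall>x. 0 \<le> \<nu> x" and nu1: "sum \<nu> Z0 = 1"
    and nuE: "\<forall>j\<in>F1. sum \<nu> (Z0 \<inter> Fx j) \<le> \<mu> (Fx j)"
    and nuL: "L1 S (Z0 \<union> (\<Union>s\<in>S. \<phi> (inv s) ` Z0)) \<nu> < c"
    using H by auto
  define Z' where "Z' = Z0 \<union> (\<Union>s\<in>S. \<phi> (inv s) ` Z0)"
  have fZ': "finite Z'" using fZ0 fS by (simp add: Z'_def)
  have l1: "(\<Sum>y\<in>Z'. \<bar>\<nu> (\<phi> s y) - \<nu> y\<bar>) < c" if "s \<in> S" for s
    using L1_each[OF fS that, where Y=Z' and \<nu>=\<nu>] nuL unfolding Z'_def by linarith
  show "\<exists>(V::nat set) (\<sigma>::'a \<Rightarrow> nat \<Rightarrow> nat).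
           finite V \<and> V \<noteq> {} \<and>
           (\<forall>g \<in> carrier G. bij_betw (\<sigma> g) V V) \<and>
           (\<forall>g \<in> F. \<forall>h \<in> F.
              real (card {v \<in> V. \<sigma> (g \<otimes> h) v = \<sigma> g (\<sigma> h v)}) \<ge> (1 - \<epsilon>) * real (card V)) \<and>
           (\<forall>g \<in> F. g \<noteq> \<one> \<longrightarrow>
              real (card {v \<in> V. \<sigma> g v \<noteq> v}) \<ge> (1 - \<epsilon>) * real (card V))"
  proof -
  define m where "m = card Z0"
  define N :: nat where "N = nat \<lceil>real m / c\<rceil> + m + 1"
  have Nmc: "real m \<le> real N * c"
  proof -
    have "real m / c \<le> real N" unfolding N_def by linarith
    thus ?thesis using c(1) by (simp add: field_simps)
  qed
  have Nm: "real m < real N" unfolding N_def by simp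
  define w where "w x = nat \<lfloor>real N * \<nu> x\<rfloor>" for x
  have nnN: "0 \<le> real N * \<nu> x" for x using nunn by simp
  have w_le: "real (w x) \<le> real N * \<nu> x" for x
    unfolding w_def using nnN[of x] by linarith
  have w_ge: "real N * \<nu> x - 1 \<le> real (w x)" for x
    unfolding w_def using nnN[of x] by linarith
  have w0: "w x = 0" if "x \<notin> Z0" for x using nu0 that by (simp add: w_def)
  define W where "W = (\<Sum>x\<in>Z0. w x)"
  have W_ge: "real N - real m \<le> real W"
  proof -
    have "(\<Sum>x\<in>Z0. real N * \<nu> x - 1) \<le> (\<Sum>x\<in>Z0. real (w x))" by (intro sum_mono w_ge)
    thus ?thesis using nu1 by (simp add: W_def sum_subtractf sum_distrib_left[symmetric] m_def)
  qed
  have Wpos: "0 < W" using W_ge Nm by linarith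
  have WN: "real N * (1 - c) \<le> real W" using W_ge Nmc by (simp add: algebra_simps)
  have c1: "0 < 1 - c" using c by simp
  have NW: "real N \<le> real W / (1 - c)" using WN c1 by (simp add: field_simps)
  define Dm where "Dm f = (\<Sum>x\<in>Z0. w x - w (f x))" for f
  have Dm_bound: "real (Dm (\<phi> s)) \<le> 2 * real N * c" if sS: "s \<in> S" for s
  proof -
    have t: "real (w x - w (\<phi> s x)) \<le> real N * \<bar>\<nu> (\<phi> s x) - \<nu> x\<bar> + 1" for x
    proof (cases "w (\<phi> s x) \<le> w x")
      case True
      hence "real (w x - w (\<phi> s x)) = real (w x) - real (w (\<phi> s x))" by simp
      also have "\<dots> \<le> real N * \<nu> x - (real N * \<nu> (\<phi> s x) - 1)"
        using w_le[of x] w_ge[of "\<phi> s x"] by linarith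
      also have "\<dots> = real N * (\<nu> x - \<nu> (\<phi> s x)) + 1" by (simp add: algebra_simps)
      also have "\<dots> \<le> real N * \<bar>\<nu> (\<phi> s x) - \<nu> x\<bar> + 1"
        by (intro add_mono mult_left_mono) auto
      finally show ?thesis .
    next
      case False thus ?thesis by simp
    qed
    have "real (Dm (\<phi> s)) = (\<Sum>x\<in>Z0. real (w x - w (\<phi> s x)))" by (simp add: Dm_def)
    also have "\<dots> \<le> (\<Sum>x\<in>Z0. real N * \<bar>\<nu> (\<phi> s x) - \<nu> x\<bar> + 1)" by (intro sum_mono t)
    also have "\<dots> = real N * (\<Sum>x\<in>Z0. \<bar>\<nu> (\<phi> s x) - \<nu> x\<bar>) + real m"
      by (simp add: sum.distrib sum_distrib_left m_def)
    finally have A: "real (Dm (\<phi> s)) \<le> real N * (\<Sum>x\<in>Z0. \<bar>\<nu> (\<phi> s x) - \<nu> x\<bar>) + real m" .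
    have "(\<Sum>x\<in>Z0. \<bar>\<nu> (\<phi> s x) - \<nu> x\<bar>) \<le> (\<Sum>x\<in>Z'. \<bar>\<nu> (\<phi> s x) - \<nu> x\<bar>)"
      using fZ' by (intro sum_mono2) (auto simp: Z'_def)
    also have "\<dots> \<le> c" using l1[OF sS] by simp
    finally have "real N * (\<Sum>x\<in>Z0. \<bar>\<nu> (\<phi> s x) - \<nu> x\<bar>) \<le> real N * c"
      by (intro mult_left_mono) auto
    thus ?thesis using A Nmc by linarith
  qed
  have fix_bound: "real (\<Sum>x\<in>{x\<in>Z0. \<phi> g x = x}. w x) \<le> real N * q" if gF: "g \<in> F1" for g
  proof -
    have eq: "{x\<in>Z0. \<phi> g x = x} = Z0 \<inter> Fx g" using Z0X by (auto simp: Fx_def)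
    have "real (\<Sum>x\<in>{x\<in>Z0. \<phi> g x = x}. w x) = (\<Sum>x\<in>Z0 \<inter> Fx g. real (w x))" by (simp add: eq)
    also have "\<dots> \<le> (\<Sum>x\<in>Z0 \<inter> Fx g. real N * \<nu> x)" by (intro sum_mono w_le)
    also have "\<dots> = real N * sum \<nu> (Z0 \<inter> Fx g)" by (simp add: sum_distrib_left)
    also have "\<dots> \<le> real N * q" using nuE gF qg[OF gF] by (intro mult_left_mono) auto
    finally show ?thesis .
  qed
  define V0 where "V0 = Sigma Z0 (\<lambda>x. {..<w x})"
  have fV0: "finite V0" using fZ0 by (simp add: V0_def)
  have cardV0: "card V0 = W" using fZ0 by (simp add: V0_def W_def card_SigmaI)
  define dom where "dom g = {u\<in>V0. snd u < w (\<phi> g (fst u))}" for g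
  define pm where "pm g = (\<lambda>u. (\<phi> g (fst u), snd u :: nat))" for g
  have domV: "dom g \<subseteq> V0" for g by (auto simp: dom_def)
  have pm_in: "pm g u \<in> V0" if "u \<in> dom g" for g u
  proof -
    have "0 < w (\<phi> g (fst u))" using that by (auto simp: dom_def)
    hence "\<phi> g (fst u) \<in> Z0" using w0 by (metis less_irrefl)
    thus ?thesis using that by (auto simp: pm_def dom_def V0_def)
  qed
  have pm_inj: "inj_on (pm g) (dom g)" if gG: "g \<in> carrier G" for g
  proof (rule inj_onI)
    fix u v assume u: "u \<in> dom g" and v: "v \<in> dom g" and eq: "pm g u = pm g v"
    have "fst u \<in> X" "fst v \<in> X" using u v Z0X by (auto simp: dom_def V0_def)
    moreover have "\<phi> g (fst u) = \<phi> g (fst v)" "snd u = snd v" using eq by (auto simp: pm_def)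
    ultimately have "fst u = fst v" using phi_bij[OF gG] by (meson bij_betw_def inj_onD)
    thus "u = v" using \<open>snd u = snd v\<close> by (simp add: prod_eq_iff)
  qed
  have "\<forall>g. \<exists>h. g \<in> carrier G \<longrightarrow> bij_betw h V0 V0 \<and> (\<forall>u\<in>dom g. h u = pm g u)"
  proof
    fix g show "\<exists>h. g \<in> carrier G \<longrightarrow> bij_betw h V0 V0 \<and> (\<forall>u\<in>dom g. h u = pm g u)"
    proof (cases "g \<in> carrier G")
      case True
      have "pm g ` dom g \<subseteq> V0" using pm_in by blast
      then obtain h where "bij_betw h V0 V0 \<and> (\<forall>u\<in>dom g. h u = pm g u)"
        using extend_bij[OF fV0 domV pm_inj[OF True]] by blast
      thus ?thesis by blast
    qed simp
  qed
  then obtain \<tau> where \<tau>: "\<And>g. g \<in> carrier G \<Longrightarrow> bij_betw (\<tau> g) V0 V0"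
    "\<And>g u. g \<in> carrier G \<Longrightarrow> u \<in> dom g \<Longrightarrow> \<tau> g u = pm g u"
    by metis
  have cnt_bad: "card {u\<in>V0. \<not> snd u < w (f (fst u))} = Dm f" for f
  proof -
    have "{u\<in>V0. \<not> snd u < w (f (fst u))} = Sigma Z0 (\<lambda>x. {w (f x)..<w x})"
      by (auto simp: V0_def)
    thus ?thesis using fZ0 by (simp add: card_SigmaI Dm_def)
  qed
  have cnt_fix: "card {u\<in>V0. \<phi> g (fst u) = fst u} = (\<Sum>x\<in>{x\<in>Z0. \<phi> g x = x}. w x)" for g
  proof -
    have "{u\<in>V0. \<phi> g (fst u) = fst u} = Sigma {x\<in>Z0. \<phi> g x = x} (\<lambda>x. {..<w x})"
      by (auto simp: V0_def)
    thus ?thesis using fZ0 by (simp add: card_SigmaI)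
  qed
  define B0 where "B0 g h = {u\<in>V0. \<tau> (g \<otimes> h) u \<noteq> \<tau> g (\<tau> h u)}" for g h
  have B0_bound: "real (card (B0 g h)) \<le> 8 * c * real W" if gF: "g \<in> F" and hF: "h \<in> F" for g h
  proof -
    have gG: "g \<in> carrier G" and hG: "h \<in> carrier G" using gF hF FG by auto
    have ghS: "g \<otimes> h \<in> S" and hS: "h \<in> S" using FFS[OF gF hF] FS hF by auto
    have ghG: "g \<otimes> h \<in> carrier G" using ghS SG by auto
    have sub: "B0 g h \<subseteq> {u\<in>V0. \<not> snd u < w (\<phi> h (fst u))} \<union> {u\<in>V0. \<not> snd u < w (\<phi> (g \<otimes> h) (fst u))}"
    proof
      fix u assume u: "u \<in> B0 g h"
      hence uV: "u \<in> V0" by (simp add: B0_def)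
      show "u \<in> {u\<in>V0. \<not> snd u < w (\<phi> h (fst u))} \<union> {u\<in>V0. \<not> snd u < w (\<phi> (g \<otimes> h) (fst u))}"
      proof (rule ccontr)
        assume "\<not> ?thesis"
        hence a1: "snd u < w (\<phi> h (fst u))" and a2: "snd u < w (\<phi> (g \<otimes> h) (fst u))" using uV by auto
        have xX: "fst u \<in> X" using uV Z0X by (auto simp: V0_def)
        have d1: "u \<in> dom h" using uV a1 by (simp add: dom_def)
        have t1: "\<tau> h u = (\<phi> h (fst u), snd u)" using \<tau>(2)[OF hG d1] by (simp add: pm_def)
        have comp: "\<phi> (g \<otimes> h) (fst u) = \<phi> g (\<phi> h (fst u))" using phi_comp[OF gG hG xX] .
        have d2: "(\<phi> h (fst u), snd u) \<in> dom g"
          using pm_in[OF d1] a2 comp by (simp add: dom_def pm_def)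
        have t2: "\<tau> g (\<tau> h u) = (\<phi> g (\<phi> h (fst u)), snd u)"
          using \<tau>(2)[OF gG d2] t1 by (simp add: pm_def)
        have d3: "u \<in> dom (g \<otimes> h)" using uV a2 by (simp add: dom_def)
        have "\<tau> (g \<otimes> h) u = (\<phi> g (\<phi> h (fst u)), snd u)"
          using \<tau>(2)[OF ghG d3] comp by (simp add: pm_def)
        thus False using u t2 by (simp add: B0_def)
      qed
    qed
    have "card (B0 g h) \<le> card ({u\<in>V0. \<not> snd u < w (\<phi> h (fst u))} \<union> {u\<in>V0. \<not> snd u < w (\<phi> (g \<otimes> h) (fst u))})"
      using sub fV0 by (intro card_mono) auto
    also have "\<dots> \<le> Dm (\<phi> h) + Dm (\<phi> (g \<otimes> h))"
      using card_Un_le[of "{u\<in>V0. \<not> snd u < w (\<phi> h (fst u))}" "{u\<in>V0. \<not> snd u < w (\<phi> (g \<otimes> h) (fst u))}"]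
        cnt_bad[of "\<phi> h"] cnt_bad[of "\<phi> (g \<otimes> h)"] by simp
    finally have "real (card (B0 g h)) \<le> real (Dm (\<phi> h)) + real (Dm (\<phi> (g \<otimes> h)))" by linarith
    also have "\<dots> \<le> 4 * real N * c" using Dm_bound[OF hS] Dm_bound[OF ghS] by linarith
    also have "\<dots> \<le> 4 * c * (real W / (1 - c))"
    proof -
      have "(4 * c) * real N \<le> (4 * c) * (real W / (1 - c))" using NW c(1) by (intro mult_left_mono) auto
      thus ?thesis by (simp add: algebra_simps)
    qed
    also have "\<dots> \<le> 8 * c * real W"
    proof -
      have "(c * 2) * real W \<le> 1 * real W" using c(4) by (intro mult_right_mono) auto
      hence "real W / (1 - c) \<le> 2 * real W" using c(4) c1 by (simp add: field_simps)
      hence "(4 * c) * (real W / (1 - c)) \<le> (4 * c) * (2 * real W)" using c(1) by (intro mult_left_mono) auto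
      thus ?thesis by simp
    qed
    finally show ?thesis .
  qed
  define Fix0 where "Fix0 g = {u\<in>V0. \<tau> g u = u}" for g
  have Fix0_bound: "real (card (Fix0 g)) \<le> r * real W" if gF: "g \<in> F1" for g
  proof -
    have gG: "g \<in> carrier G" using gF FG by (auto simp: F1_def)
    have gS: "g \<in> S" using gF FS by (auto simp: F1_def)
    have sub: "Fix0 g \<subseteq> {u\<in>V0. \<phi> g (fst u) = fst u} \<union> {u\<in>V0. \<not> snd u < w (\<phi> g (fst u))}"
    proof
      fix u assume u: "u \<in> Fix0 g"
      hence uV: "u \<in> V0" by (simp add: Fix0_def)
      show "u \<in> {u\<in>V0. \<phi> g (fst u) = fst u} \<union> {u\<in>V0. \<not> snd u < w (\<phi> g (fst u))}"
      proof (cases "snd u < w (\<phi> g (fst u))")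
        case True
        hence "u \<in> dom g" using uV by (simp add: dom_def)
        hence "\<tau> g u = (\<phi> g (fst u), snd u)" using \<tau>(2)[OF gG] by (simp add: pm_def)
        hence "\<phi> g (fst u) = fst u" using u by (auto simp: Fix0_def prod_eq_iff)
        thus ?thesis using uV by simp
      qed (use uV in simp)
    qed
    have "card (Fix0 g) \<le> card ({u\<in>V0. \<phi> g (fst u) = fst u} \<union> {u\<in>V0. \<not> snd u < w (\<phi> g (fst u))})"
      using sub fV0 by (intro card_mono) auto
    also have "\<dots> \<le> (\<Sum>x\<in>{x\<in>Z0. \<phi> g x = x}. w x) + Dm (\<phi> g)"
      using card_Un_le[of "{u\<in>V0. \<phi> g (fst u) = fst u}" "{u\<in>V0. \<not> snd u < w (\<phi> g (fst u))}"]
        cnt_bad[of "\<phi> g"] cnt_fix[of g] by simp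
    finally have "real (card (Fix0 g)) \<le> real (\<Sum>x\<in>{x\<in>Z0. \<phi> g x = x}. w x) + real (Dm (\<phi> g))"
      by linarith
    also have "\<dots> \<le> real N * (q + 2 * c)" using fix_bound[OF gF] Dm_bound[OF gS]
      by (simp add: algebra_simps)
    also have "\<dots> \<le> real W / (1 - c) * (q + 2 * c)"
      using NW q0 c(1) by (intro mult_right_mono) auto
    also have "\<dots> \<le> r * real W"
    proof -
      have "q + 2 * c \<le> r * (1 - c)"
      proof -
        have "c * (1 + q) \<le> 2 * c" using q1 c(1) by simp
        moreover have "(1 + q) / 2 * (1 - c) = (1 + q) / 2 - c * (1 + q) / 2" by (simp add: field_simps)
        moreover have "8 * c \<le> 1 - q" using c(2) by simp
        ultimately show ?thesis using c(1) unfolding r_def by argo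
      qed
      hence "real W * (q + 2 * c) \<le> real W * (r * (1 - c))" by (intro mult_left_mono) auto
      thus ?thesis using c1 by (simp add: field_simps)
    qed
    finally show ?thesis .
  qed
  define I where "I = {..<n}"
  define V' where "V' = PiE I (\<lambda>_. V0)"
  define \<sigma>' where "\<sigma>' g v = restrict (\<lambda>i. \<tau> g (v i)) I" for g v
  have fI: "finite I" and cardI: "card I = n" by (simp_all add: I_def)
  have fV': "finite V'" using fV0 fI by (simp add: V'_def finite_PiE)
  have cardV': "card V' = W ^ n" using cardV0 fI cardI by (simp add: V'_def card_PiE)
  have V0ne: "V0 \<noteq> {}" using cardV0 Wpos by auto
  have V'ne: "V' \<noteq> {}" using V0ne by (simp add: V'_def PiE_eq_empty_iff)
  have Wn: "real W ^ n = real W * real W ^ (n - 1)" by (simp add: n_def)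
  have bijs: "\<forall>g\<in>carrier G. bij_betw (\<sigma>' g) V' V'"
  proof
    fix g assume "g \<in> carrier G"
    from bij_PiE_map[OF \<tau>(1)[OF this], of I] show "bij_betw (\<sigma>' g) V' V'"
      unfolding V'_def \<sigma>'_def by simp
  qed
  have prodG: "\<forall>g\<in>F. \<forall>h\<in>F. g \<otimes> h \<in> carrier G" using FFS SG by auto
  have mult: "\<forall>g\<in>F. \<forall>h\<in>F. real (card {v\<in>V'. \<sigma>' (g \<otimes> h) v = \<sigma>' g (\<sigma>' h v)}) \<ge> (1-\<epsilon>) * real (card V')"
  proof (intro ballI)
    fix g h assume gF: "g \<in> F" and hF: "h \<in> F"
    have B0V: "B0 g h \<subseteq> V0" by (auto simp: B0_def)
    have sub: "{v\<in>V'. \<not> \<sigma>' (g \<otimes> h) v = \<sigma>' g (\<sigma>' h v)} \<subseteq> (\<Union>i\<in>I. {v\<in>V'. v i \<in> B0 g h})"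
    proof
      fix v assume v: "v \<in> {v\<in>V'. \<not> \<sigma>' (g \<otimes> h) v = \<sigma>' g (\<sigma>' h v)}"
      show "v \<in> (\<Union>i\<in>I. {v\<in>V'. v i \<in> B0 g h})"
      proof (rule ccontr)
        assume "\<not> ?thesis"
        hence nb: "\<And>i. i \<in> I \<Longrightarrow> v i \<notin> B0 g h" using v by auto
        have "\<sigma>' (g \<otimes> h) v = \<sigma>' g (\<sigma>' h v)"
          unfolding \<sigma>'_def
        proof (rule restrict_ext)
          fix i assume i: "i \<in> I"
          have "v i \<in> V0" using v i by (auto simp: V'_def PiE_iff)
          thus "\<tau> (g \<otimes> h) (v i) = \<tau> g (restrict (\<lambda>i. \<tau> h (v i)) I i)"
            using nb[OF i] i by (simp add: B0_def)
        qed
        thus False using v by simp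
      qed
    qed
    have "card {v\<in>V'. \<not> \<sigma>' (g \<otimes> h) v = \<sigma>' g (\<sigma>' h v)} \<le> card (\<Union>i\<in>I. {v\<in>V'. v i \<in> B0 g h})"
      using sub fV' fI by (intro card_mono) auto
    also have "\<dots> \<le> (\<Sum>i\<in>I. card {v\<in>V'. v i \<in> B0 g h})" by (rule card_UN_le[OF fI])
    also have "\<dots> = (\<Sum>i\<in>I. card (B0 g h) * W ^ (n - 1))"
      using card_slice[OF fI _ B0V] cardV0 cardI by (simp add: V'_def)
    also have "\<dots> = n * (card (B0 g h) * W ^ (n - 1))" using cardI by simp
    finally have "real (card {v\<in>V'. \<not> \<sigma>' (g \<otimes> h) v = \<sigma>' g (\<sigma>' h v)}) \<le> real (n * (card (B0 g h) * W ^ (n - 1)))"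
      by (simp only: of_nat_le_iff)
    also have "\<dots> = real n * (real (card (B0 g h)) * real W ^ (n - 1))" by simp
    also have "\<dots> \<le> real n * ((8 * c * real W) * real W ^ (n - 1))"
      using B0_bound[OF gF hF] by (intro mult_left_mono mult_right_mono) auto
    also have "\<dots> = (8 * real n * c) * real W ^ n" using Wn by (simp add: algebra_simps)
    also have "\<dots> \<le> \<epsilon> * real W ^ n"
    proof -
      have "8 * real n * c \<le> \<epsilon>" using c(3) npos by (simp add: field_simps)
      thus ?thesis by (intro mult_right_mono) auto
    qed
    finally have bad: "real (card {v\<in>V'. \<not> \<sigma>' (g \<otimes> h) v = \<sigma>' g (\<sigma>' h v)}) \<le> \<epsilon> * real (card V')"
      using cardV' by simp
    have "card {v\<in>V'. \<sigma>' (g \<otimes> h) v = \<sigma>' g (\<sigma>' h v)} + card {v\<in>V'. \<not> \<sigma>' (g \<otimes> h) v = \<sigma>' g (\<sigma>' h v)} = card V'"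
      by (rule card_split[OF fV'])
    thus "real (card {v\<in>V'. \<sigma>' (g \<otimes> h) v = \<sigma>' g (\<sigma>' h v)}) \<ge> (1-\<epsilon>) * real (card V')"
      using bad by (simp add: algebra_simps)
  qed
  have nf: "\<forall>g\<in>F. g \<noteq> \<one> \<longrightarrow> real (card {v\<in>V'. \<sigma>' g v \<noteq> v}) \<ge> (1-\<epsilon>) * real (card V')"
  proof (intro ballI impI)
    fix g assume gF: "g \<in> F" and g1: "g \<noteq> \<one>"
    have gF1: "g \<in> F1" using gF g1 by (simp add: F1_def)
    have "{v\<in>V'. \<sigma>' g v = v} = PiE I (\<lambda>_. Fix0 g)"
      unfolding V'_def \<sigma>'_def Fix0_def by (rule PiE_fixed)
    hence "card {v\<in>V'. \<sigma>' g v = v} = card (Fix0 g) ^ n" using fI cardI by (simp add: card_PiE)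
    hence "real (card {v\<in>V'. \<sigma>' g v = v}) = real (card (Fix0 g)) ^ n" by simp
    also have "\<dots> \<le> (r * real W) ^ n" by (intro power_mono Fix0_bound[OF gF1]) auto
    also have "\<dots> = r ^ n * real W ^ n" by (simp add: power_mult_distrib)
    also have "\<dots> \<le> \<epsilon> * real W ^ n" using rn by (intro mult_right_mono) auto
    finally have fixd: "real (card {v\<in>V'. \<sigma>' g v = v}) \<le> \<epsilon> * real (card V')" using cardV' by simp
    have "card {v\<in>V'. \<sigma>' g v = v} + card {v\<in>V'. \<not> \<sigma>' g v = v} = card V'"
      by (rule card_split[OF fV'])
    thus "real (card {v\<in>V'. \<sigma>' g v \<noteq> v}) \<ge> (1-\<epsilon>) * real (card V')"
      using fixd by (simp add: algebra_simps)
  qed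
  show ?thesis using transfer_nat[OF fV' V'ne bijs prodG FG mult nf] by simp
  qed
qed

end

theorem proposition5p1:
  fixes G :: "('a, 'c) monoid_scheme" and X :: "'b set"
    and \<phi> :: "'a \<Rightarrow> 'b \<Rightarrow> 'b" and \<mu> :: "'b set \<Rightarrow> real"
  assumes "group G" and "countable (carrier G)"
    and "countable X"
    and "group_action G X \<phi>"
    and "is_mean X \<mu>"
    and "preserves_mean G X \<phi> \<mu>"
    and "strongly_faithful G X \<phi> \<mu>"
  shows "sofic G"
proof -
  interpret setting2 G X \<phi> \<mu>
    by (rule setting2.intro[OF setting.intro setting2_axioms.intro]) (use assms in auto)
  show ?thesis using main[OF assms(7)] .
qed

end
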